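(* Let $G$ be a mirror graph, $v$ a vertex with neighbours $v_1,\dots,v_k$, and $A\le \mathrm{Aut}(G)$ the subgroup generated by all mirror automorphisms. For $i\ne j$ let $k_{ij}$ be the order of $\alpha_{vv_i}\alpha_{vv_j}$ (half the length of the unique convex cycle through $vv_i$ and $vv_j$), and $k_{ii}=1$. Then $$A\cong\langle \alpha_{vv_1},\dots,\alpha_{vv_k}\mid (\alpha_{vv_i}\alpha_{vv_j})^{k_{ij}}=1\ \ (1\le i,j\le k)\rangle,$$ so $A$ is a finite Coxeter group and $G\cong\mathrm{Cay}(A,\{\alpha_{vv_1},\dots,\alpha_{vv_k}\})$.
   Context: A mirror graph is a finite connected simple graph $G$ admitting a partition $\{E_1,\dots,E_k\}$ of its edges such that for every $i$ there is an automorphism $\alpha_i$ swapping the endpoints of every edge of $E_i$, with $G-E_i$ having exactly two components that $\alpha_i$ maps isomorphically onto each other. Mirror graphs are partial cubes whose mirror partition is the partition into $\Theta$-classes ($ab\,\Theta\,xy$ iff $d(a,x)+d(b,y)\neq d(a,y)+d(b,x)$). For an edge $xy$, the mirror automorphism $\alpha_{xy}$ is the unique automorphism swapping the endpoints of every edge $\Theta$-equivalent to $xy$. A cycle is convex if every shortest path between two of its vertices lies on it. $\mathrm{Cay}(A,S)$ has vertex set $A$, with $\beta_1,\beta_2$ adjacent iff $\beta_1=s\beta_2$ for some $s\in S$. *)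

theory Defs
  imports "HOL-Algebra.Algebra"
begin

definition simple_graph :: "'a set \<Rightarrow> ('a \<Rightarrow> 'a \<Rightarrow> bool) \<Rightarrow> bool" where
  "simple_graph V E \<longleftrightarrow> finite V \<and> (\<forall>x y. E x y \<longrightarrow> x \<in> V \<and> y \<in> V)
     \<and> (\<forall>x y. E x y \<longrightarrow> E y x) \<and> (\<forall>x. \<not> E x x)"

fun walk :: "('a \<Rightarrow> 'a \<Rightarrow> bool) \<Rightarrow> 'a list \<Rightarrow> bool" where
  "walk E [] = False"
| "walk E [x] = True"
| "walk E (x # y # xs) = (E x y \<and> walk E (y # xs))"

definition reach :: "'a set \<Rightarrow> ('a \<Rightarrow> 'a \<Rightarrow> bool) \<Rightarrow> 'a \<Rightarrow> 'a \<Rightarrow> bool" where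
  "reach V E x y \<longleftrightarrow> (\<exists>p. walk E p \<and> set p \<subseteq> V \<and> hd p = x \<and> last p = y)"

definition connected_graph :: "'a set \<Rightarrow> ('a \<Rightarrow> 'a \<Rightarrow> bool) \<Rightarrow> bool" where
  "connected_graph V E \<longleftrightarrow> V \<noteq> {} \<and> (\<forall>x\<in>V. \<forall>y\<in>V. reach V E x y)"

definition gdist :: "'a set \<Rightarrow> ('a \<Rightarrow> 'a \<Rightarrow> bool) \<Rightarrow> 'a \<Rightarrow> 'a \<Rightarrow> nat" where
  "gdist V E x y = (LEAST n. \<exists>p. walk E p \<and> set p \<subseteq> V \<and> hd p = x \<and> last p = y
                                 \<and> length p = Suc n)"

definition edges :: "('a \<Rightarrow> 'a \<Rightarrow> bool) \<Rightarrow> 'a set set" where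
  "edges E = {{x, y} | x y. E x y}"

definition del_edges :: "('a \<Rightarrow> 'a \<Rightarrow> bool) \<Rightarrow> 'a set set \<Rightarrow> 'a \<Rightarrow> 'a \<Rightarrow> bool" where
  "del_edges E F = (\<lambda>x y. E x y \<and> {x, y} \<notin> F)"

definition components :: "'a set \<Rightarrow> ('a \<Rightarrow> 'a \<Rightarrow> bool) \<Rightarrow> 'a set set" where
  "components V E = {{y \<in> V. reach V E x y} | x. x \<in> V}"

definition graph_aut :: "'a set \<Rightarrow> ('a \<Rightarrow> 'a \<Rightarrow> bool) \<Rightarrow> ('a \<Rightarrow> 'a) \<Rightarrow> bool" where
  "graph_aut V E f \<longleftrightarrow> bij_betw f V V \<and> (\<forall>x\<in>V. \<forall>y\<in>V. E x y \<longleftrightarrow> E (f x) (f y))"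

definition mirror_graph :: "'a set \<Rightarrow> ('a \<Rightarrow> 'a \<Rightarrow> bool) \<Rightarrow> bool" where
  "mirror_graph V E \<longleftrightarrow> simple_graph V E \<and> connected_graph V E \<and>
    (\<exists>P. {} \<notin> P \<and> \<Union>P = edges E \<and> (\<forall>F1\<in>P. \<forall>F2\<in>P. F1 \<noteq> F2 \<longrightarrow> F1 \<inter> F2 = {}) \<and>
       (\<forall>Ei\<in>P. \<exists>\<alpha>. graph_aut V E \<alpha>
           \<and> (\<forall>x y. E x y \<and> {x, y} \<in> Ei \<longrightarrow> \<alpha> x = y \<and> \<alpha> y = x)
           \<and> (\<exists>C1 C2. components V (del_edges E Ei) = {C1, C2} \<and> C1 \<noteq> C2 \<and> \<alpha> ` C1 = C2)))"

definition theta :: "'a set \<Rightarrow> ('a \<Rightarrow> 'a \<Rightarrow> bool) \<Rightarrow> 'a \<Rightarrow> 'a \<Rightarrow> 'a \<Rightarrow> 'a \<Rightarrow> bool" where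
  "theta V E a b x y \<longleftrightarrow> gdist V E a x + gdist V E b y \<noteq> gdist V E a y + gdist V E b x"

text \<open>The mirror automorphism of the edge xy (as an element of the symmetric group
  BijGroup V, i.e. extensional on V): the unique automorphism swapping the endpoints
  of every edge Theta-equivalent to xy.\<close>
definition mirror_aut :: "'a set \<Rightarrow> ('a \<Rightarrow> 'a \<Rightarrow> bool) \<Rightarrow> 'a \<Rightarrow> 'a \<Rightarrow> ('a \<Rightarrow> 'a)" where
  "mirror_aut V E x y = (THE f. f \<in> extensional V \<and> graph_aut V E f \<and>
      (\<forall>a b. E a b \<and> theta V E a b x y \<longrightarrow> f a = b \<and> f b = a))"

definition mirror_auts :: "'a set \<Rightarrow> ('a \<Rightarrow> 'a \<Rightarrow> bool) \<Rightarrow> ('a \<Rightarrow> 'a) set" where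
  "mirror_auts V E = {mirror_aut V E x y | x y. E x y}"

definition mirror_group :: "'a set \<Rightarrow> ('a \<Rightarrow> 'a \<Rightarrow> bool) \<Rightarrow> ('a \<Rightarrow> 'a) monoid" where
  "mirror_group V E = subgroup_generated (BijGroup V) (mirror_auts V E)"

definition cayley_adj :: "('g, 'b) monoid_scheme \<Rightarrow> 'g set \<Rightarrow> 'g \<Rightarrow> 'g \<Rightarrow> bool" where
  "cayley_adj A S b1 b2 \<longleftrightarrow> b1 \<in> carrier A \<and> b2 \<in> carrier A \<and> (\<exists>s\<in>S. b1 = s \<otimes>\<^bsub>A\<^esub> b2)"

text \<open>Words are lists over the generator indices 0..k-1; two words are equivalent
  iff they are related by the equivalence closure of inserting/deleting relators
  (s_i s_j)^(m i j) as subwords.  The presented group is the quotient monoid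
  (which is the group defined by the presentation, since every relator set here
  contains s_i^2 when m i i = 1).\<close>

definition words :: "nat \<Rightarrow> nat list set" where
  "words k = {w. set w \<subseteq> {..<k}}"

inductive cox_eq :: "(nat \<Rightarrow> nat \<Rightarrow> nat) \<Rightarrow> nat \<Rightarrow> nat list \<Rightarrow> nat list \<Rightarrow> bool"
  for m k where
  refl: "w \<in> words k \<Longrightarrow> cox_eq m k w w"
| sym: "cox_eq m k u w \<Longrightarrow> cox_eq m k w u"
| trans: "cox_eq m k u v \<Longrightarrow> cox_eq m k v w \<Longrightarrow> cox_eq m k u w"
| rel: "u \<in> words k \<Longrightarrow> v \<in> words k \<Longrightarrow> i < k \<Longrightarrow> j < k \<Longrightarrow>
        cox_eq m k (u @ concat (replicate (m i j) [i, j]) @ v) (u @ v)"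

definition cox_rel :: "(nat \<Rightarrow> nat \<Rightarrow> nat) \<Rightarrow> nat \<Rightarrow> (nat list \<times> nat list) set" where
  "cox_rel m k = {(u, w). cox_eq m k u w}"

definition presented_group :: "(nat \<Rightarrow> nat \<Rightarrow> nat) \<Rightarrow> nat \<Rightarrow> nat list set monoid" where
  "presented_group m k =
    \<lparr>carrier = words k // cox_rel m k,
     monoid.mult = (\<lambda>U W. \<Union>x\<in>U. \<Union>y\<in>W. cox_rel m k `` {x @ y}),
     one = cox_rel m k `` {[]}\<rparr>"

definition gen_class :: "(nat \<Rightarrow> nat \<Rightarrow> nat) \<Rightarrow> nat \<Rightarrow> nat \<Rightarrow> nat list set" where
  "gen_class m k i = cox_rel m k `` {[i]}"

end

theory Submission
  imports Defs
begin

lemma walk_nonempty: "walk E p \<Longrightarrow> p \<noteq> []" by (cases p) auto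

lemma walk_Cons2: "p \<noteq> [] \<Longrightarrow> walk E (x # p) \<longleftrightarrow> E x (hd p) \<and> walk E p"
  by (cases p) auto

lemma walk_Cons_iff: "walk E (x # p) \<longleftrightarrow> p = [] \<or> (E x (hd p) \<and> walk E p)"
  by (cases p) auto

lemma walk_app: "walk E p \<Longrightarrow> walk E q \<Longrightarrow> E (last p) (hd q) \<Longrightarrow> walk E (p @ q)"
  apply (induction E p rule: walk.induct)
  apply simp
  apply (metis append_Cons append_Nil last_ConsL walk_Cons_iff)
  apply simp
  done

lemma walk_appD: "walk E (p @ q) \<Longrightarrow> p \<noteq> [] \<Longrightarrow> q \<noteq> [] \<Longrightarrow> walk E p \<and> walk E q \<and> E (last p) (hd q)"
proof (induction p)
  case Nil then show ?case by simp
next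
  case (Cons a p)
  show ?case
  proof (cases "p = []")
    case True then show ?thesis using Cons by (simp add: walk_Cons2)
  next
    case False
    then have "walk E (p @ q)" "E a (hd p)" using Cons.prems by (auto simp: walk_Cons2)
    then show ?thesis using Cons False by (auto simp: walk_Cons2)
  qed
qed

lemma walk_rev: "(\<And>x y. E x y \<Longrightarrow> E y x) \<Longrightarrow> walk E p \<Longrightarrow> walk E (rev p)"
proof (induction E p rule: walk.induct)
  case (3 E x y xs)
  then have "walk E (rev (y # xs))" by simp
  moreover have "last (rev (y # xs)) = y" by simp
  ultimately show ?case using 3 walk_app[of E "rev (y # xs)" "[x]"] by simp
qed auto

lemma walk_map: "walk E p \<Longrightarrow> (\<forall>x\<in>set p. \<forall>y\<in>set p. E x y \<longrightarrow> E' (f x) (f y)) \<Longrightarrow> walk E' (map f p)"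
proof (induction E p rule: walk.induct)
  case (3 E x y xs)
  have "walk E' (map f (y # xs))" using 3 by (intro "3.IH") auto
  moreover have "E' (f x) (f y)" using 3 by auto
  ultimately show ?case by simp
qed auto

lemma walk_mono: "walk E p \<Longrightarrow> (\<forall>x y. E x y \<longrightarrow> E' x y) \<Longrightarrow> walk E' p"
proof (induction E p rule: walk.induct)
  case (3 E x y xs)
  then show ?case by simp
qed auto

lemma walk_restrict: "walk E p \<Longrightarrow> set p \<subseteq> S \<Longrightarrow> walk (\<lambda>x y. E x y \<and> x \<in> S \<and> y \<in> S) p"
proof (induction E p rule: walk.induct)
  case (3 E x y xs)
  then show ?case by simp
qed auto

lemma walk_inv: "walk R p \<Longrightarrow> (\<forall>u w. R u w \<longrightarrow> (Q u \<longleftrightarrow> Q w)) \<Longrightarrow> (Q (hd p) \<longleftrightarrow> Q (last p))"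
proof (induction R p rule: walk.induct)
  case (3 R x y xs)
  have "walk R (y # xs)" "R x y" using "3.prems"(1) by simp_all
  then have "Q y = Q (last (y # xs))" using "3.IH" "3.prems"(2) by simp
  moreover have "Q x = Q y" using \<open>R x y\<close> "3.prems"(2) by blast
  ultimately show ?case by simp
qed simp_all

lemma walk_cross: "walk E p \<Longrightarrow> Q (hd p) \<Longrightarrow> \<not> Q (last p) \<Longrightarrow>
   \<exists>p1 u w p2. p = p1 @ u # w # p2 \<and> Q u \<and> \<not> Q w"
proof (induction E p rule: walk.induct)
  case (3 E x y xs)
  show ?case
  proof (cases "Q y")
    case True
    then have "\<exists>p1 u w p2. y # xs = p1 @ u # w # p2 \<and> Q u \<and> \<not> Q w"
      using 3 by (intro "3.IH") simp_all
    then obtain p1 u w p2 where "y # xs = p1 @ u # w # p2" "Q u" "\<not> Q w" by blast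
    then show ?thesis by (intro exI[of _ "x # p1"]) simp
  next
    case False
    then show ?thesis using 3 by (intro exI[of _ "[]"]) simp
  qed
qed auto

lemma idx_cross: "a \<le> n \<Longrightarrow> (f :: nat \<Rightarrow> bool) a \<noteq> f n \<Longrightarrow> \<exists>j. a \<le> j \<and> j < n \<and> f j \<noteq> f (Suc j)"
proof (induction n)
  case 0 then show ?case by simp
next
  case (Suc n)
  show ?case
  proof (cases "a = Suc n")
    case True then show ?thesis using Suc by simp
  next
    case False
    then have "a \<le> n" using Suc by simp
    show ?thesis
    proof (cases "f n = f (Suc n)")
      case True then show ?thesis using Suc \<open>a \<le> n\<close> by fastforce
    next
      case False then show ?thesis using \<open>a \<le> n\<close> by (intro exI[of _ n]) auto
    qed
  qed
qed

lemma reach_refl: "x \<in> V \<Longrightarrow> reach V R x x"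
  unfolding reach_def by (intro exI[of _ "[x]"]) auto

lemma reach_V: "reach V R x y \<Longrightarrow> x \<in> V \<and> y \<in> V"
  unfolding reach_def by (auto dest!: walk_nonempty)

lemma reach_sym: "(\<And>x y. R x y \<Longrightarrow> R y x) \<Longrightarrow> reach V R x y \<Longrightarrow> reach V R y x"
proof -
  assume s: "\<And>x y. R x y \<Longrightarrow> R y x" and "reach V R x y"
  then obtain p where p: "walk R p" "set p \<subseteq> V" "hd p = x" "last p = y" unfolding reach_def by blast
  then have "p \<noteq> []" using walk_nonempty by blast
  then have "walk R (rev p) \<and> set (rev p) \<subseteq> V \<and> hd (rev p) = y \<and> last (rev p) = x"
    using p walk_rev[of R p, OF s] by (simp add: hd_rev last_rev)
  then show ?thesis unfolding reach_def by blast
qed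

lemma reach_trans: "reach V R x y \<Longrightarrow> reach V R y z \<Longrightarrow> reach V R x z"
proof -
  assume "reach V R x y" "reach V R y z"
  then obtain p q where p: "walk R p" "set p \<subseteq> V" "hd p = x" "last p = y"
    and q: "walk R q" "set q \<subseteq> V" "hd q = y" "last q = z" unfolding reach_def by blast
  have pne: "p \<noteq> []" and qne: "q \<noteq> []" using p q walk_nonempty by auto
  show ?thesis
  proof (cases "tl q = []")
    case True
    then have "q = [y]" using qne q by (cases q) auto
    then show ?thesis using p q unfolding reach_def by auto
  next
    case False
    have "walk R (tl q)" using q qne False by (cases q) (auto simp: walk_Cons2)
    moreover have "R y (hd (tl q))" using q qne False by (cases q) (auto simp: walk_Cons2)
    ultimately have "walk R (p @ tl q)" using p walk_app by metis
    moreover have "set (tl q) \<subseteq> V" using q qne by (cases q) auto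
    moreover have "last (p @ tl q) = z" using False q qne by (cases q) auto
    moreover have "hd (p @ tl q) = x" using pne p by simp
    moreover have "set (p @ tl q) \<subseteq> V" using p \<open>set (tl q) \<subseteq> V\<close> by simp
    ultimately show ?thesis unfolding reach_def by blast
  qed
qed

lemma reach_edge: "R x y \<Longrightarrow> x \<in> V \<Longrightarrow> y \<in> V \<Longrightarrow> reach V R x y"
  unfolding reach_def by (intro exI[of _ "[x,y]"]) auto

lemma reach_walk_in: "walk R p \<Longrightarrow> set p \<subseteq> V \<Longrightarrow> z \<in> set p \<Longrightarrow> reach V R (hd p) z"
proof (induction R p rule: walk.induct)
  case (3 R x y xs)
  show ?case
  proof (cases "z = x")
    case True then show ?thesis using "3.prems" reach_refl[of x V R] by simp
  next
    case False
    then have "reach V R y z" using "3.prems" "3.IH" by simp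
    moreover have "reach V R x y" using "3.prems" by (intro reach_edge) auto
    ultimately show ?thesis using reach_trans by (metis list.sel(1))
  qed
qed (auto intro: reach_refl)


locale cg =
  fixes V :: "'a set" and E :: "'a \<Rightarrow> 'a \<Rightarrow> bool"
  assumes sg: "simple_graph V E" and cn: "connected_graph V E"
begin

lemma finV: "finite V" using sg unfolding simple_graph_def by blast
lemma EV: "E x y \<Longrightarrow> x \<in> V \<and> y \<in> V" using sg unfolding simple_graph_def by blast
lemma Esym: "E x y \<Longrightarrow> E y x" using sg unfolding simple_graph_def by blast
lemma Eirr: "\<not> E x x" using sg unfolding simple_graph_def by blast

abbreviation d where "d \<equiv> gdist V E"

definition wlk where "wlk p x y n \<longleftrightarrow> walk E p \<and> set p \<subseteq> V \<and> hd p = x \<and> last p = y \<and> length p = Suc n"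

lemma d_le: "wlk p x y n \<Longrightarrow> d x y \<le> n"
  unfolding gdist_def wlk_def by (rule Least_le) blast

lemma d_ex: assumes "x \<in> V" "y \<in> V" shows "\<exists>p. wlk p x y (d x y)"
proof -
  obtain p where p: "walk E p" "set p \<subseteq> V" "hd p = x" "last p = y"
    using cn assms unfolding connected_graph_def reach_def by blast
  then have "length p = Suc (length p - 1)" using walk_nonempty by fastforce
  then have ex: "\<exists>n p. walk E p \<and> set p \<subseteq> V \<and> hd p = x \<and> last p = y \<and> length p = Suc n"
    using p by blast
  show ?thesis unfolding wlk_def gdist_def by (rule LeastI_ex[OF ex])
qed

lemma d_refl: "x \<in> V \<Longrightarrow> d x x = 0"
  using d_le[of "[x]" x x 0] by (simp add: wlk_def)

lemma d_eq0: assumes "x \<in> V" "y \<in> V" "d x y = 0" shows "x = y"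
proof -
  obtain p where "wlk p x y 0" using d_ex[OF assms(1,2)] assms(3) by metis
  then show ?thesis unfolding wlk_def by (cases p) auto
qed

lemma d_edge: assumes "E x y" shows "d x y = 1"
proof -
  have "wlk [x, y] x y 1" using assms EV unfolding wlk_def by simp
  then have "d x y \<le> 1" by (rule d_le)
  moreover have "d x y \<noteq> 0" using d_eq0 assms EV Eirr by metis
  ultimately show ?thesis by simp
qed

lemma wlk_app: assumes "wlk p x y n" "wlk q y z m" shows "wlk (p @ tl q) x z (n + m)"
proof -
  have pne: "p \<noteq> []" and qne: "q \<noteq> []" using assms unfolding wlk_def by auto
  show ?thesis
  proof (cases "tl q = []")
    case True
    then have "q = [y]" using qne assms unfolding wlk_def by (cases q) auto
    then show ?thesis using assms unfolding wlk_def by auto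
  next
    case False
    have w: "walk E (tl q)" "E y (hd (tl q))" using assms qne False unfolding wlk_def
      by (cases q; auto simp: walk_Cons2)+
    then have "walk E (p @ tl q)" using assms walk_app unfolding wlk_def by metis
    moreover have "set (tl q) \<subseteq> V" using assms qne unfolding wlk_def by (cases q) auto
    moreover have "last (p @ tl q) = z" using False assms qne unfolding wlk_def by (cases q) auto
    moreover have "hd (p @ tl q) = x" using pne assms unfolding wlk_def by simp
    moreover have "length (p @ tl q) = Suc (n + m)" using assms unfolding wlk_def by simp
    ultimately show ?thesis using assms unfolding wlk_def by simp
  qed
qed

lemma d_tri: assumes "x \<in> V" "y \<in> V" "z \<in> V" shows "d x z \<le> d x y + d y z"
proof -
  obtain p where "wlk p x y (d x y)" using d_ex[OF assms(1,2)] by blast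
  moreover obtain q where "wlk q y z (d y z)" using d_ex[OF assms(2,3)] by blast
  ultimately
  have "wlk (p @ tl q) x z (d x y + d y z)" by (rule wlk_app)
  then show ?thesis by (rule d_le)
qed

lemma wlk_rev: "wlk p x y n \<Longrightarrow> wlk (rev p) y x n"
  unfolding wlk_def using walk_rev[of E p] Esym walk_nonempty
  by (auto simp: hd_rev last_rev)

lemma d_sym: assumes "x \<in> V" "y \<in> V" shows "d x y = d y x"
proof -
  have "d y x \<le> d x y" if xy: "x \<in> V" "y \<in> V" for x y
  proof -
    obtain p where "wlk p x y (d x y)" using d_ex[OF xy] by blast
    then show ?thesis using wlk_rev d_le by metis
  qed
  then show ?thesis using assms by (meson antisym)
qed

lemma d_split: assumes "wlk (p1 @ u # w # p2) x y n" shows "d x u + d w y + 1 \<le> n"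
proof -
  have W: "walk E ((p1 @ [u]) @ (w # p2))" using assms unfolding wlk_def by simp
  then have w1: "walk E (p1 @ [u])" and w2: "walk E (w # p2)"
    using walk_appD[OF W] by auto
  have "wlk (p1 @ [u]) x u (length p1)" using w1 assms unfolding wlk_def by (cases p1) auto
  moreover have "wlk (w # p2) w y (length p2)" using w2 assms unfolding wlk_def by (cases p2) auto
  ultimately have "d x u \<le> length p1" "d w y \<le> length p2" using d_le by auto
  moreover have "n = length p1 + length p2 + 1" using assms unfolding wlk_def by simp
  ultimately show ?thesis by simp
qed

lemma nb_closer: assumes "v \<in> V" "u \<in> V" "d v u = Suc n" shows "\<exists>x. E x u \<and> d v x = n"
proof -
  obtain p where p: "wlk p v u (Suc n)" using d_ex[OF assms(1,2)] assms(3) by metis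
  then have len: "length p = Suc (Suc n)" unfolding wlk_def by simp
  then have bne: "butlast p \<noteq> []" by (cases p) auto
  have pe: "p = butlast p @ [u]" using p len unfolding wlk_def
    by (metis append_butlast_last_id list.size(3) nat.distinct(1))
  have W: "walk E (butlast p @ [u])" using p pe unfolding wlk_def by metis
  then have wb: "walk E (butlast p)" and ex: "E (last (butlast p)) u"
    using walk_appD[OF W bne] by auto
  have "hd (butlast p) = v" using p bne pe unfolding wlk_def by (metis hd_append2)
  then have "wlk (butlast p) v (last (butlast p)) n"
    using wb p len unfolding wlk_def by (auto dest: in_set_butlastD)
  then have le: "d v (last (butlast p)) \<le> n" by (rule d_le)
  have "d v u \<le> d v (last (butlast p)) + d (last (butlast p)) u"
    using d_tri assms EV[OF ex] by blast
  then have "d v (last (butlast p)) \<ge> n" using d_edge[OF ex] assms by simp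
  then show ?thesis using le ex by (intro exI[of _ "last (butlast p)"]) simp
qed

lemma d_adj: assumes "E x y" "a \<in> V" shows "d a y \<le> Suc (d a x)"
  using d_tri[of a x y] d_edge[OF assms(1)] EV[OF assms(1)] assms by simp

lemma aut_bij: "graph_aut V E f \<Longrightarrow> bij_betw f V V" unfolding graph_aut_def by blast
lemma aut_V: "graph_aut V E f \<Longrightarrow> x \<in> V \<Longrightarrow> f x \<in> V"
  unfolding graph_aut_def by (meson bij_betwE)
lemma aut_E: "graph_aut V E f \<Longrightarrow> E x y \<Longrightarrow> E (f x) (f y)"
  unfolding graph_aut_def using EV by blast
lemma aut_E_iff: "graph_aut V E f \<Longrightarrow> x \<in> V \<Longrightarrow> y \<in> V \<Longrightarrow> E (f x) (f y) \<longleftrightarrow> E x y"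
  unfolding graph_aut_def by blast
lemma aut_inj: "graph_aut V E f \<Longrightarrow> x \<in> V \<Longrightarrow> y \<in> V \<Longrightarrow> f x = f y \<Longrightarrow> x = y"
  unfolding graph_aut_def bij_betw_def inj_on_def by blast

lemma aut_inv: assumes "graph_aut V E f" shows "graph_aut V E (restrict (inv_into V f) V)"
proof -
  have b: "bij_betw f V V" using assms aut_bij by blast
  then have b2: "bij_betw (inv_into V f) V V" by (rule bij_betw_inv_into)
  then have "bij_betw (restrict (inv_into V f) V) V V" by (rule bij_betw_cong[THEN iffD1, rotated]) simp
  moreover have "E (inv_into V f x) (inv_into V f y) = E x y" if "x \<in> V" "y \<in> V" for x y
  proof -
    have "f (inv_into V f x) = x" "f (inv_into V f y) = y"
      using b that by (simp_all add: bij_betw_inv_into_right)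
    moreover have "inv_into V f x \<in> V" "inv_into V f y \<in> V" using b2 that by (meson bij_betwE)+
    ultimately show ?thesis using aut_E_iff[OF assms] by metis
  qed
  ultimately show ?thesis unfolding graph_aut_def by simp
qed

lemma aut_inv_l: "graph_aut V E f \<Longrightarrow> x \<in> V \<Longrightarrow> inv_into V f (f x) = x"
  using aut_bij bij_betw_inv_into_left by metis
lemma aut_inv_r: "graph_aut V E f \<Longrightarrow> x \<in> V \<Longrightarrow> f (inv_into V f x) = x"
  using aut_bij bij_betw_inv_into_right by metis
lemma aut_inv_V: "graph_aut V E f \<Longrightarrow> x \<in> V \<Longrightarrow> inv_into V f x \<in> V"
  using aut_bij bij_betw_inv_into bij_betwE by metis

lemma aut_comp: assumes "graph_aut V E f" "graph_aut V E g" shows "graph_aut V E (restrict (\<lambda>x. f (g x)) V)"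
proof -
  have "bij_betw (f \<circ> g) V V" using assms aut_bij bij_betw_trans by blast
  then have "bij_betw (restrict (\<lambda>x. f (g x)) V) V V"
    by (rule bij_betw_cong[THEN iffD1, rotated]) simp
  moreover have "E (f (g x)) (f (g y)) = E x y" if "x \<in> V" "y \<in> V" for x y
    using that assms aut_E_iff aut_V by metis
  ultimately show ?thesis unfolding graph_aut_def by simp
qed

lemma d_aut_le: assumes "graph_aut V E f" "x \<in> V" "y \<in> V" shows "d (f x) (f y) \<le> d x y"
proof -
  obtain p where p: "wlk p x y (d x y)" using d_ex[OF assms(2,3)] by blast
  have "walk E (map f p)" using p unfolding wlk_def
    by (intro walk_map) (auto intro: aut_E[OF assms(1)])
  moreover have "set (map f p) \<subseteq> V" using p aut_V[OF assms(1)] unfolding wlk_def by auto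
  moreover have "p \<noteq> []" using p unfolding wlk_def by auto
  ultimately have "wlk (map f p) (f x) (f y) (d x y)" using p unfolding wlk_def
    by (simp add: hd_map last_map)
  then show ?thesis by (rule d_le)
qed

lemma d_aut: assumes "graph_aut V E f" "x \<in> V" "y \<in> V" shows "d (f x) (f y) = d x y"
proof -
  let ?g = "restrict (inv_into V f) V"
  have "d (?g (f x)) (?g (f y)) \<le> d (f x) (f y)"
    using d_aut_le[OF aut_inv[OF assms(1)]] aut_V assms by blast
  moreover have "?g (f x) = x" "?g (f y) = y" using aut_inv_l aut_V assms by auto
  ultimately show ?thesis using d_aut_le[OF assms] by simp
qed

end

lemma walk_mid: "walk E (p1 @ u # w # p2) \<Longrightarrow> E u w"
proof -
  assume W: "walk E (p1 @ u # w # p2)"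
  have "walk E ((p1 @ [u]) @ (w # p2))" using W by simp
  from walk_appD[OF this] show ?thesis by simp
qed

context cg begin
lemma aut_restrict: "graph_aut V E f \<Longrightarrow> graph_aut V E (restrict f V)"
  unfolding graph_aut_def by (auto simp: bij_betw_cong[of V "restrict f V" f V])
end

locale mg = cg + assumes mir: "mirror_graph V E"
begin

definition Pprop where "Pprop P \<longleftrightarrow> {} \<notin> P \<and> \<Union>P = edges E \<and> (\<forall>F1\<in>P. \<forall>F2\<in>P. F1 \<noteq> F2 \<longrightarrow> F1 \<inter> F2 = {}) \<and>
       (\<forall>Ei\<in>P. \<exists>\<alpha>. graph_aut V E \<alpha>
           \<and> (\<forall>x y. E x y \<and> {x, y} \<in> Ei \<longrightarrow> \<alpha> x = y \<and> \<alpha> y = x)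
           \<and> (\<exists>C1 C2. components V (del_edges E Ei) = {C1, C2} \<and> C1 \<noteq> C2 \<and> \<alpha> ` C1 = C2))"

definition PP where "PP = (SOME P. Pprop P)"

lemma PP: "Pprop PP"
proof -
  have "\<exists>P. Pprop P" using mir unfolding mirror_graph_def Pprop_def by blast
  then show ?thesis unfolding PP_def by (rule someI_ex)
qed

lemma PP_edges: "\<Union>PP = edges E" using PP unfolding Pprop_def by (elim conjE)
lemma PP_disj_all: "\<forall>F1\<in>PP. \<forall>F2\<in>PP. F1 \<noteq> F2 \<longrightarrow> F1 \<inter> F2 = {}" using PP unfolding Pprop_def by (elim conjE)
lemma PP_disj: "F1 \<in> PP \<Longrightarrow> F2 \<in> PP \<Longrightarrow> F1 \<noteq> F2 \<Longrightarrow> F1 \<inter> F2 = {}" using PP_disj_all by blast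
lemma PP_ne: "{} \<notin> PP" using PP unfolding Pprop_def by (elim conjE)
lemma PP_mir: "\<forall>Ei\<in>PP. \<exists>\<alpha>. graph_aut V E \<alpha>
           \<and> (\<forall>x y. E x y \<and> {x, y} \<in> Ei \<longrightarrow> \<alpha> x = y \<and> \<alpha> y = x)
           \<and> (\<exists>C1 C2. components V (del_edges E Ei) = {C1, C2} \<and> C1 \<noteq> C2 \<and> \<alpha> ` C1 = C2)"
  using PP unfolding Pprop_def by (elim conjE)

lemma cls_ex: assumes "E x y" shows "\<exists>F\<in>PP. {x,y} \<in> F"
proof -
  have "{x,y} \<in> edges E" using assms unfolding edges_def by blast
  then show ?thesis using PP_edges by blast
qed

lemma cls_uniq: "F \<in> PP \<Longrightarrow> F' \<in> PP \<Longrightarrow> e \<in> F \<Longrightarrow> e \<in> F' \<Longrightarrow> F = F'"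
  using PP_disj by blast

lemma cls_elem: assumes "F \<in> PP" "e \<in> F" shows "\<exists>x y. e = {x,y} \<and> E x y"
proof -
  have "e \<in> edges E" using assms PP_edges by blast
  then show ?thesis unfolding edges_def by blast
qed

lemma cls_ne: assumes "F \<in> PP" shows "\<exists>x y. E x y \<and> {x,y} \<in> F"
proof -
  obtain e where "e \<in> F" using assms PP_ne by (metis all_not_in_conv)
  then show ?thesis using cls_elem assms by blast
qed

definition cut where "cut F W1 W2 \<sigma> \<longleftrightarrow> W1 \<union> W2 = V \<and> W1 \<inter> W2 = {} \<and> W1 \<noteq> {} \<and> W2 \<noteq> {}
  \<and> graph_aut V E \<sigma> \<and> \<sigma> ` W1 = W2 \<and> \<sigma> ` W2 = W1
  \<and> (\<forall>x y. E x y \<longrightarrow> {x,y} \<notin> F \<longrightarrow> (x \<in> W1 \<longleftrightarrow> y \<in> W1))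
  \<and> (\<forall>x y. E x y \<longrightarrow> {x,y} \<in> F \<longrightarrow> \<sigma> x = y \<and> \<sigma> y = x)
  \<and> (\<forall>x y. E x y \<longrightarrow> {x,y} \<in> F \<longrightarrow> (x \<in> W1 \<longleftrightarrow> y \<in> W2))
  \<and> (\<forall>x\<in>W1. \<forall>y\<in>W1. \<exists>p. walk (del_edges E F) p \<and> set p \<subseteq> W1 \<and> hd p = x \<and> last p = y)
  \<and> (\<forall>x\<in>W2. \<forall>y\<in>W2. \<exists>p. walk (del_edges E F) p \<and> set p \<subseteq> W2 \<and> hd p = x \<and> last p = y)"

lemma cut_union: "cut F W1 W2 \<sigma> \<Longrightarrow> W1 \<union> W2 = V" unfolding cut_def by (elim conjE) assumption
lemma cut_disj: "cut F W1 W2 \<sigma> \<Longrightarrow> W1 \<inter> W2 = {}" unfolding cut_def by (elim conjE) assumption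
lemma cut_ne: "cut F W1 W2 \<sigma> \<Longrightarrow> W1 \<noteq> {}" unfolding cut_def by (elim conjE) assumption
lemma cut_ne2: "cut F W1 W2 \<sigma> \<Longrightarrow> W2 \<noteq> {}" unfolding cut_def by (elim conjE) assumption
lemma cut_aut: "cut F W1 W2 \<sigma> \<Longrightarrow> graph_aut V E \<sigma>" unfolding cut_def by (elim conjE) assumption
lemma cut_img: "cut F W1 W2 \<sigma> \<Longrightarrow> \<sigma> ` W1 = W2" unfolding cut_def by (elim conjE) assumption
lemma cut_img2: "cut F W1 W2 \<sigma> \<Longrightarrow> \<sigma> ` W2 = W1" unfolding cut_def by (elim conjE) assumption
lemma cut_same_all: "cut F W1 W2 \<sigma> \<Longrightarrow> \<forall>x y. E x y \<longrightarrow> {x,y} \<notin> F \<longrightarrow> (x \<in> W1 \<longleftrightarrow> y \<in> W1)"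
  unfolding cut_def by (elim conjE) assumption
lemma cut_swap_all: "cut F W1 W2 \<sigma> \<Longrightarrow> \<forall>x y. E x y \<longrightarrow> {x,y} \<in> F \<longrightarrow> \<sigma> x = y \<and> \<sigma> y = x"
  unfolding cut_def by (elim conjE) assumption
lemma cut_cross_all: "cut F W1 W2 \<sigma> \<Longrightarrow> \<forall>x y. E x y \<longrightarrow> {x,y} \<in> F \<longrightarrow> (x \<in> W1 \<longleftrightarrow> y \<in> W2)"
  unfolding cut_def by (elim conjE) assumption
lemma cut_walk1: "cut F W1 W2 \<sigma> \<Longrightarrow> \<forall>x\<in>W1. \<forall>y\<in>W1. \<exists>p. walk (del_edges E F) p \<and> set p \<subseteq> W1 \<and> hd p = x \<and> last p = y"
  unfolding cut_def by (elim conjE) assumption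
lemma cut_walk2: "cut F W1 W2 \<sigma> \<Longrightarrow> \<forall>x\<in>W2. \<forall>y\<in>W2. \<exists>p. walk (del_edges E F) p \<and> set p \<subseteq> W2 \<and> hd p = x \<and> last p = y"
  unfolding cut_def by (elim conjE) assumption

lemma cut_V: "cut F W1 W2 \<sigma> \<Longrightarrow> x \<in> W1 \<Longrightarrow> x \<in> V" "cut F W1 W2 \<sigma> \<Longrightarrow> x \<in> W2 \<Longrightarrow> x \<in> V"
  using cut_union by blast+
lemma cut_part: "cut F W1 W2 \<sigma> \<Longrightarrow> x \<in> V \<Longrightarrow> x \<in> W1 \<longleftrightarrow> x \<notin> W2"
  using cut_union cut_disj by blast
lemma cut_same: "cut F W1 W2 \<sigma> \<Longrightarrow> E x y \<Longrightarrow> {x,y} \<notin> F \<Longrightarrow> x \<in> W1 \<longleftrightarrow> y \<in> W1"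
  using cut_same_all by blast
lemma cut_swap: "cut F W1 W2 \<sigma> \<Longrightarrow> E x y \<Longrightarrow> {x,y} \<in> F \<Longrightarrow> \<sigma> x = y \<and> \<sigma> y = x"
  using cut_swap_all by blast
lemma cut_cross: "cut F W1 W2 \<sigma> \<Longrightarrow> E x y \<Longrightarrow> {x,y} \<in> F \<Longrightarrow> x \<in> W1 \<longleftrightarrow> y \<in> W2"
  using cut_cross_all by blast
lemma cut_walk: "cut F W1 W2 \<sigma> \<Longrightarrow> x \<in> W1 \<Longrightarrow> y \<in> W1 \<Longrightarrow>
   \<exists>p. walk (del_edges E F) p \<and> set p \<subseteq> W1 \<and> hd p = x \<and> last p = y"
  using cut_walk1 by blast

lemma cut_sym: assumes c: "cut F W1 W2 \<sigma>" shows "cut F W2 W1 \<sigma>"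
proof -
  have V: "W1 \<union> W2 = V" "W1 \<inter> W2 = {}" using cut_union[OF c] cut_disj[OF c] by blast+
  have c1: "\<forall>x y. E x y \<longrightarrow> {x,y} \<notin> F \<longrightarrow> (x \<in> W2 \<longleftrightarrow> y \<in> W2)"
  proof (intro allI impI)
    fix x y assume "E x y" "{x,y} \<notin> F"
    then have "x \<in> W1 \<longleftrightarrow> y \<in> W1" "x \<in> V" "y \<in> V" using cut_same[OF c] EV by blast+
    then show "x \<in> W2 \<longleftrightarrow> y \<in> W2" using V by blast
  qed
  have e: "\<forall>x y. E x y \<longrightarrow> {x,y} \<in> F \<longrightarrow> (x \<in> W2 \<longleftrightarrow> y \<in> W1)"
  proof (intro allI impI)
    fix x y assume "E x y" "{x,y} \<in> F"
    then have "x \<in> W1 \<longleftrightarrow> y \<in> W2" "x \<in> V" "y \<in> V" using cut_cross[OF c] EV by blast+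
    then show "x \<in> W2 \<longleftrightarrow> y \<in> W1" using V by blast
  qed
  have u: "W2 \<union> W1 = V" "W2 \<inter> W1 = {}" using V by blast+
  show ?thesis unfolding cut_def
    apply (intro conjI)
    apply (rule u(1) u(2) cut_ne2[OF c] cut_ne[OF c] cut_aut[OF c] cut_img2[OF c] cut_img[OF c]
        c1 cut_swap_all[OF c] e cut_walk2[OF c] cut_walk1[OF c])+
    done
qed

lemma cut_ex: assumes "F \<in> PP" shows "\<exists>W1 W2 \<sigma>. cut F W1 W2 \<sigma>"
proof -
  obtain \<alpha> C1 C2 where aut: "graph_aut V E \<alpha>"
    and sw: "\<forall>x y. E x y \<and> {x, y} \<in> F \<longrightarrow> \<alpha> x = y \<and> \<alpha> y = x"
    and comp0: "components V (del_edges E F) = {C1, C2}" "C1 \<noteq> C2" "\<alpha> ` C1 = C2"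
    using bspec[OF PP_mir assms] by (elim exE conjE) (rule that, assumption+)
  define R where "R = del_edges E F"
  have comp: "components V R = {C1, C2}" "C1 \<noteq> C2" "\<alpha> ` C1 = C2" using comp0 unfolding R_def by simp_all
  have Rd: "R x y \<longleftrightarrow> E x y \<and> {x,y} \<notin> F" for x y unfolding R_def del_edges_def by simp
  have Rsym: "R x y \<Longrightarrow> R y x" for x y unfolding Rd using Esym by (simp add: insert_commute)
  define cp where "cp x = {y \<in> V. reach V R x y}" for x
  have Ci: "\<exists>x\<in>V. C = cp x" if "C \<in> components V R" for C
    using that unfolding components_def cp_def by blast
  have key: "cp x = cp z" if "z \<in> cp x" for x z
  proof -
    have rz: "reach V R x z" using that unfolding cp_def by blast
    have "reach V R x y \<longleftrightarrow> reach V R z y" for y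
      using rz reach_trans reach_sym[of R, OF Rsym] by metis
    then show ?thesis unfolding cp_def by blast
  qed
  have selfin: "x \<in> cp x" if "x \<in> V" for x using that reach_refl unfolding cp_def by fastforce
  have cpin: "cp x \<in> components V R" if "x \<in> V" for x using that unfolding components_def cp_def by blast
  have cover: "x \<in> C1 \<or> x \<in> C2" if "x \<in> V" for x
    using cpin[OF that] selfin[OF that] comp(1) by auto
  obtain x1 where x1: "x1 \<in> V" "C1 = cp x1" using Ci comp(1) by blast
  obtain x2 where x2: "x2 \<in> V" "C2 = cp x2" using Ci comp(1) by blast
  have disj: "C1 \<inter> C2 = {}"
  proof (rule ccontr)
    assume "C1 \<inter> C2 \<noteq> {}"
    then obtain z where "z \<in> C1" "z \<in> C2" by blast
    then have "C1 = cp z" "C2 = cp z" using key[of z x1] key[of z x2] x1(2) x2(2) by simp_all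
    then show False using comp(2) by simp
  qed
  have sub: "C1 \<subseteq> V" "C2 \<subseteq> V" using x1 x2 unfolding cp_def by blast+
  have union: "C1 \<union> C2 = V" using cover sub by blast
  have closed: "y \<in> cp x" if "R z y" "z \<in> cp x" for x y z
  proof -
    have r: "reach V R x z" "z \<in> V" using that(2) unfolding cp_def by simp_all
    have "E z y" using that(1) unfolding Rd by simp
    then have yV: "y \<in> V" using EV by blast
    have "reach V R z y" using reach_edge[of R z y V] that(1) r(2) yV by blast
    then have "reach V R x y" using reach_trans[OF r(1)] by blast
    then show ?thesis using yV unfolding cp_def by simp
  qed
  have same1: "x \<in> C1 \<longleftrightarrow> y \<in> C1" if "E x y" "{x,y} \<notin> F" for x y
  proof -
    have "R x y" "R y x" using that Rd Rsym by blast+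
    then show ?thesis using closed[of x y x1] closed[of y x x1] x1(2) by blast
  qed
  have bij: "bij_betw \<alpha> V V" using aut unfolding graph_aut_def by blast
  have img2: "\<alpha> ` C2 = C1"
  proof -
    have "\<alpha> ` V = V" using bij bij_betw_imp_surj_on by blast
    then have "\<alpha> ` C1 \<union> \<alpha> ` C2 = V" using union by (metis image_Un)
    then have A: "C1 \<subseteq> \<alpha> ` C2" using comp(3) disj union by blast
    have "inj_on \<alpha> V" using bij bij_betw_def by blast
    then have "\<alpha> ` C2 \<inter> \<alpha> ` C1 = \<alpha> ` (C2 \<inter> C1)" using sub union
      by (intro inj_on_image_Int[symmetric]) auto
    then have "\<alpha> ` C2 \<inter> C2 = {}" using comp(3) disj by auto
    moreover have "\<alpha> ` C2 \<subseteq> V" using sub bij bij_betw_imp_surj_on by blast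
    ultimately show ?thesis using A union by blast
  qed
  have crossF: "x \<in> C1 \<longleftrightarrow> y \<in> C2" if "E x y" "{x,y} \<in> F" for x y
  proof -
    have xy: "\<alpha> x = y" using sw that by blast
    have "x \<in> V" using that EV by blast
    then show ?thesis using xy comp(3) img2 disj cover by blast
  qed
  have walks: "\<exists>p. walk (del_edges E F) p \<and> set p \<subseteq> C \<and> hd p = x \<and> last p = y"
    if "C = cp z" "x \<in> C" "y \<in> C" for C z x y
  proof -
    have "C = cp x" using that key by metis
    then have "reach V R x y" using that unfolding cp_def by blast
    then obtain p where p: "walk R p" "set p \<subseteq> V" "hd p = x" "last p = y" unfolding reach_def by blast
    have "set p \<subseteq> cp x" using reach_walk_in[OF p(1,2)] p(2,3) unfolding cp_def by blast
    then show ?thesis using p \<open>C = cp x\<close> unfolding R_def by blast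
  qed
  have ne: "C1 \<noteq> {}" "C2 \<noteq> {}" using selfin x1 x2 by blast+
  have sw': "\<forall>x y. E x y \<longrightarrow> {x,y} \<in> F \<longrightarrow> \<alpha> x = y \<and> \<alpha> y = x" using sw by blast
  have s1': "\<forall>x y. E x y \<longrightarrow> {x,y} \<notin> F \<longrightarrow> (x \<in> C1 \<longleftrightarrow> y \<in> C1)" using same1 by blast
  have cF': "\<forall>x y. E x y \<longrightarrow> {x,y} \<in> F \<longrightarrow> (x \<in> C1 \<longleftrightarrow> y \<in> C2)" using crossF by blast
  have w1: "\<forall>x\<in>C1. \<forall>y\<in>C1. \<exists>p. walk (del_edges E F) p \<and> set p \<subseteq> C1 \<and> hd p = x \<and> last p = y"
    using walks x1 by blast
  have w2: "\<forall>x\<in>C2. \<forall>y\<in>C2. \<exists>p. walk (del_edges E F) p \<and> set p \<subseteq> C2 \<and> hd p = x \<and> last p = y"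
    using walks x2 by blast
  have "cut F C1 C2 \<alpha>"
    unfolding cut_def
    apply (intro conjI)
    apply (rule union disj ne aut comp(3) img2 s1' sw' cF' w1 w2)+
    done
  then show ?thesis by blast
qed

lemma cut_ex_at: assumes "F \<in> PP" "x \<in> V" shows "\<exists>W1 W2 \<sigma>. cut F W1 W2 \<sigma> \<and> x \<in> W1"
proof -
  obtain W1 W2 \<sigma> where c: "cut F W1 W2 \<sigma>" using cut_ex assms by blast
  show ?thesis
  proof (cases "x \<in> W1")
    case True then show ?thesis using c by blast
  next
    case False
    then have "x \<in> W2" using c assms cut_part by blast
    then show ?thesis using cut_sym[OF c] by blast
  qed
qed

lemma side_b: assumes c: "cut F W1 W2 \<sigma>" and e: "E x y" "{x,y} \<in> F" and x: "x \<in> W1" and a: "a \<in> W1"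
  shows "d a y = Suc (d a x)"
proof -
  have y2: "y \<in> W2" using cut_cross[OF c e] x by blast
  have V: "a \<in> V" "x \<in> V" "y \<in> V" using a EV[OF e(1)] cut_V c by auto
  have le: "d a y \<le> Suc (d a x)" using d_adj[OF e(1) V(1)] .
  obtain p where p: "wlk p a y (d a y)" using d_ex[OF V(1,3)] by blast
  have "y \<notin> W1" using y2 c cut_part V by blast
  then obtain p1 u w p2 where pp: "p = p1 @ u # w # p2" "u \<in> W1" "w \<notin> W1"
    using walk_cross[of E p "\<lambda>z. z \<in> W1"] p a unfolding wlk_def by blast
  have euw: "E u w" using p pp walk_mid unfolding wlk_def by metis
  then have uwV: "u \<in> V" "w \<in> V" using EV by blast+
  have F: "{u,w} \<in> F" using cut_same[OF c euw] pp by blast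
  have s1: "\<sigma> u = w" "\<sigma> w = u" using cut_swap[OF c euw F] by simp_all
  have s2: "\<sigma> x = y" "\<sigma> y = x" using cut_swap[OF c e] by simp_all
  have "d u x = d w y" using d_aut[OF cut_aut[OF c] uwV(2) V(3)] s1 s2 by simp
  moreover have "d a x \<le> d a u + d u x" using d_tri V uwV by blast
  moreover have "d a u + d w y + 1 \<le> d a y" using d_split p pp by blast
  ultimately show ?thesis using le by linarith
qed

lemma side_b2: assumes c: "cut F W1 W2 \<sigma>" and e: "E x y" "{x,y} \<in> F" and x: "x \<in> W1" and a: "a \<in> W2"
  shows "d a x = Suc (d a y)"
proof -
  have "y \<in> W2" using cut_cross[OF c e] x by blast
  moreover have "E y x" "{y,x} \<in> F" using e Esym by (auto simp: insert_commute)
  ultimately show ?thesis using side_b[OF cut_sym[OF c]] a by blast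
qed

lemma B: assumes e: "E x y" and a: "a \<in> V" shows "d a y = Suc (d a x) \<or> d a x = Suc (d a y)"
proof -
  obtain F where F: "F \<in> PP" "{x,y} \<in> F" using cls_ex[OF e] by blast
  obtain W1 W2 \<sigma> where c: "cut F W1 W2 \<sigma>" "x \<in> W1" using cut_ex_at F EV e by blast
  show ?thesis
  proof (cases "a \<in> W1")
    case True then show ?thesis using side_b c e F by blast
  next
    case False
    then have "a \<in> W2" using c a cut_part by blast
    then show ?thesis using side_b2 c e F by blast
  qed
qed

definition side where "side x y a \<longleftrightarrow> d a x < d a y"

lemma side_cut: assumes c: "cut F W1 W2 \<sigma>" and e: "E x y" "{x,y} \<in> F" and x: "x \<in> W1" and a: "a \<in> V"
  shows "side x y a \<longleftrightarrow> a \<in> W1"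
proof (cases "a \<in> W1")
  case True then show ?thesis using side_b[OF c e x True] unfolding side_def by simp
next
  case False
  then have "a \<in> W2" using c a cut_part by blast
  then show ?thesis using side_b2[OF c e x] False unfolding side_def by simp
qed

lemma theta_side: assumes "E a b" "E x y"
  shows "theta V E a b x y \<longleftrightarrow> (side x y a \<longleftrightarrow> \<not> side x y b)"
proof -
  have "a \<in> V" "b \<in> V" using assms EV by blast+
  then have "d a y = Suc (d a x) \<or> d a x = Suc (d a y)" "d b y = Suc (d b x) \<or> d b x = Suc (d b y)"
    using B assms by blast+
  then show ?thesis unfolding theta_def side_def by auto
qed

lemma theta_cls: assumes F: "F \<in> PP" "{x,y} \<in> F" and e: "E x y" "E a b"
  shows "theta V E a b x y \<longleftrightarrow> {a,b} \<in> F"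
proof -
  obtain W1 W2 \<sigma> where c: "cut F W1 W2 \<sigma>" "x \<in> W1" using cut_ex_at F EV e by blast
  have ab: "a \<in> V" "b \<in> V" using e EV by blast+
  have sa: "side x y a \<longleftrightarrow> a \<in> W1" and sb: "side x y b \<longleftrightarrow> b \<in> W1"
    using side_cut[OF c(1) e(1) F(2) c(2)] ab by blast+
  show ?thesis
  proof (cases "{a,b} \<in> F")
    case True
    then have "a \<in> W1 \<longleftrightarrow> b \<in> W2" using cut_cross[OF c(1) e(2)] by blast
    then show ?thesis using True theta_side[OF e(2) e(1)] sa sb cut_part[OF c(1)] ab by blast
  next
    case False
    then have "a \<in> W1 \<longleftrightarrow> b \<in> W1" using cut_same[OF c(1) e(2)] by blast
    then show ?thesis using False theta_side[OF e(2) e(1)] sa sb by blast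
  qed
qed

lemma mirror_const: assumes "E a b" "E x y" "theta V E a b x y"
  shows "mirror_aut V E a b = mirror_aut V E x y"
proof -
  obtain F where F: "F \<in> PP" "{x,y} \<in> F" using cls_ex assms by blast
  have abF: "{a,b} \<in> F" using theta_cls[OF F assms(2,1)] assms(3) by blast
  have eq: "theta V E c e a b = theta V E c e x y" if "E c e" for c e
    using theta_cls[OF F assms(2) that] theta_cls[OF F(1) abF assms(1) that] by blast
  have "(\<forall>c e. E c e \<and> theta V E c e a b \<longrightarrow> Q c e) \<longleftrightarrow> (\<forall>c e. E c e \<and> theta V E c e x y \<longrightarrow> Q c e)" for Q
    using eq by blast
  then show ?thesis unfolding mirror_aut_def by simp
qed

end

context cg begin
lemma aut_cong: assumes "graph_aut V E f" "\<And>z. z \<in> V \<Longrightarrow> f z = f' z" shows "graph_aut V E f'"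
proof -
  have "bij_betw f' V V" using assms(1) bij_betw_cong[of V f f' V] assms(2) unfolding graph_aut_def by blast
  moreover have "\<forall>x\<in>V. \<forall>y\<in>V. E x y \<longleftrightarrow> E (f' x) (f' y)" using assms unfolding graph_aut_def by simp
  ultimately show ?thesis unfolding graph_aut_def by blast
qed
end

context mg begin

lemma cut_card: assumes c: "cut F W1 W2 \<sigma>" shows "card W1 = card W2"
proof -
  have "inj_on \<sigma> V" using aut_bij[OF cut_aut[OF c]] unfolding bij_betw_def by blast
  moreover have "W1 \<subseteq> V" using cut_V[OF c] by blast
  ultimately have "inj_on \<sigma> W1" by (rule inj_on_subset)
  then have "card (\<sigma> ` W1) = card W1" by (rule card_image)
  then show ?thesis using cut_img[OF c] by simp
qed

lemma cut_cardV: assumes c: "cut F W1 W2 \<sigma>" shows "card V = card W1 + card W2"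
proof -
  have "W1 \<subseteq> V" "W2 \<subseteq> V" using cut_V[OF c] by blast+
  then have "finite W1" "finite W2" using finV finite_subset by blast+
  then show ?thesis using card_Un_disjoint[of W1 W2] cut_union[OF c] cut_disj[OF c] by simp
qed

lemma EXW: assumes c: "cut F W1 W2 \<sigma>" and F: "F \<in> PP" and C: "C \<in> PP" "C \<noteq> F"
  shows "\<exists>u u'. E u u' \<and> {u,u'} \<in> C \<and> u \<in> W2 \<and> u' \<in> W2"
proof (rule ccontr)
  assume no: "\<not> ?thesis"
  obtain x0 where x0: "x0 \<in> W2" using cut_ne2[OF c] by blast
  then have x0V: "x0 \<in> V" using cut_V[OF c] by blast
  obtain U1 U2 \<tau> where cc: "cut C U1 U2 \<tau>" "x0 \<in> U1" using cut_ex_at[OF C(1) x0V] by blast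
  have sub: "W2 \<subseteq> U1"
  proof
    fix x assume x: "x \<in> W2"
    obtain p where p: "walk (del_edges E F) p" "set p \<subseteq> W2" "hd p = x0" "last p = x"
      using cut_walk[OF cut_sym[OF c] x0 x] by blast
    have w: "walk (\<lambda>u w. del_edges E F u w \<and> u \<in> W2 \<and> w \<in> W2) p" using walk_restrict[OF p(1,2)] .
    have inv: "\<forall>u w. (del_edges E F u w \<and> u \<in> W2 \<and> w \<in> W2) \<longrightarrow> (u \<in> U1 \<longleftrightarrow> w \<in> U1)"
    proof (intro allI impI)
      fix u w assume a: "del_edges E F u w \<and> u \<in> W2 \<and> w \<in> W2"
      then have euw: "E u w" unfolding del_edges_def by simp
      moreover have "{u,w} \<notin> C" using no a euw by blast
      ultimately show "u \<in> U1 \<longleftrightarrow> w \<in> U1" using cut_same[OF cc(1)] by blast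
    qed
    have "x0 \<in> U1 \<longleftrightarrow> x \<in> U1" using walk_inv[OF w inv] p(3,4) by simp
    then show "x \<in> U1" using cc(2) by simp
  qed
  have U2W1: "U2 \<subseteq> W1"
  proof
    fix u assume u: "u \<in> U2"
    then have uV: "u \<in> V" using cut_V[OF cc(1)] by blast
    then have "u \<notin> U1" using cut_part[OF cc(1)] u by blast
    then have "u \<notin> W2" using sub by blast
    then show "u \<in> W1" using cut_part[OF c uV] by blast
  qed
  have cd: "card U2 = card W1" using cut_card[OF c] cut_card[OF cc(1)] cut_cardV[OF c] cut_cardV[OF cc(1)] by linarith
  have "W1 \<subseteq> V" using cut_union[OF c] by blast
  then have fW: "finite W1" using finV by (rule finite_subset)
  have U2eq: "U2 = W1" using card_subset_eq[OF fW U2W1 cd] .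
  obtain u u' where uu: "E u u'" "{u,u'} \<in> C" using cls_ne[OF C(1)] by blast
  have uV: "u \<in> V" "u' \<in> V" using EV uu(1) by blast+
  have "C \<inter> F = {}" using PP_disj C F by blast
  then have "{u,u'} \<notin> F" using uu by blast
  then have s: "u \<in> W1 \<longleftrightarrow> u' \<in> W1" using cut_same[OF c uu(1)] by blast
  have x: "u \<in> U1 \<longleftrightarrow> u' \<in> U2" using cut_cross[OF cc(1) uu] .
  have "u \<in> U1 \<longleftrightarrow> u \<notin> U2" using cut_part[OF cc(1) uV(1)] .
  then show False using s x U2eq by blast
qed

lemma edge_contra: assumes cc: "cut C U1 U2 \<tau>" and e: "E a b" "{a,b} \<in> C" and ab: "a \<in> U1" "b \<in> U2"
  and z: "z \<in> U1" "z' \<in> U2" and eq: "d z a = d z' a" "d z b = d z' b" shows False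
proof -
  have "d z b = Suc (d z a)" using side_b[OF cc e ab(1) z(1)] .
  moreover have "d z' a = Suc (d z' b)" using side_b2[OF cc e ab(1) z(2)] .
  ultimately show False using eq by simp
qed

lemma resolve: assumes c: "cut F W1 W2 \<sigma>" and F: "F \<in> PP" and z: "z \<in> V" "z' \<in> V"
  and eq: "\<forall>u\<in>W2. d u z = d u z'" shows "z = z'"
proof (rule ccontr)
  assume ne: "z \<noteq> z'"
  have zW: "z \<notin> W2"
  proof
    assume "z \<in> W2"
    then have "d z z = d z z'" using eq by blast
    then have "d z z' = 0" using d_refl z by simp
    then show False using d_eq0 z ne by blast
  qed
  have zW': "z' \<notin> W2"
  proof
    assume "z' \<in> W2"
    then have "d z' z = d z' z'" using eq by blast
    then have "d z' z = 0" using d_refl z by simp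
    then show False using d_eq0 z ne by metis
  qed
  have z1: "z \<in> W1" "z' \<in> W1" using cut_part[OF c] z zW zW' by blast+
  have "d z' z \<noteq> 0" using d_eq0[OF z(2) z(1)] ne by metis
  then obtain n where n: "d z' z = Suc n" by (cases "d z' z") auto
  obtain y where ye: "E y z" "d z' y = n" using nb_closer[OF z(2) z(1) n] by blast
  have e: "E z y" using Esym ye by blast
  obtain C where C: "C \<in> PP" "{z,y} \<in> C" using cls_ex[OF e] by blast
  have notF: "{z,y} \<notin> F"
  proof
    assume zF: "{z,y} \<in> F"
    have "d z' y = Suc (d z' z)" using side_b[OF c e zF z1(1) z1(2)] .
    then show False using n ye by simp
  qed
  have CF: "C \<noteq> F" using C notF by blast
  obtain u u' where uu: "E u u'" "{u,u'} \<in> C" "u \<in> W2" "u' \<in> W2" using EXW[OF c F C(1) CF] by blast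
  obtain U1 U2 \<tau> where cc: "cut C U1 U2 \<tau>" "z \<in> U1" using cut_ex_at[OF C(1) z(1)] by blast
  have "side z y z' \<longleftrightarrow> z' \<in> U1" using side_cut[OF cc(1) e C(2) cc(2) z(2)] .
  moreover have "\<not> side z y z'" unfolding side_def using n ye by simp
  ultimately have z'U2: "z' \<in> U2" using cut_part[OF cc(1) z(2)] by blast
  have uV: "u \<in> V" "u' \<in> V" using uu EV by blast+
  have "d u z = d u z'" "d u' z = d u' z'" using eq uu(3,4) by blast+
  then have eqs: "d z u = d z' u" "d z u' = d z' u'"
    using d_sym[OF z(1) uV(1)] d_sym[OF z(2) uV(1)] d_sym[OF z(1) uV(2)] d_sym[OF z(2) uV(2)] by simp_all
  show False
  proof (cases "u \<in> U1")
    case True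
    then have "u' \<in> U2" using cut_cross[OF cc(1) uu(1,2)] by blast
    then show False using edge_contra[OF cc(1) uu(1,2) True _ cc(2) z'U2 eqs] by blast
  next
    case False
    then have u2: "u \<in> U2" using cut_part[OF cc(1) uV(1)] by blast
    have "u' \<notin> U2" using cut_cross[OF cc(1) uu(1,2)] False by blast
    then have u1: "u' \<in> U1" using cut_part[OF cc(1) uV(2)] by blast
    have "E u' u" "{u',u} \<in> C" using uu Esym by (auto simp: insert_commute)
    then show False using edge_contra[OF cc(1) _ _ u1 u2 cc(2) z'U2 eqs(2) eqs(1)] by blast
  qed
qed

lemma swap_side: assumes c: "cut F W1 W2 \<sigma>" and F: "F \<in> PP" and f: "graph_aut V E f"
  and sw: "\<forall>a b. E a b \<and> {a,b} \<in> F \<longrightarrow> f a = b \<and> f b = a" and x: "x \<in> W1" shows "f x \<in> W2"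
proof -
  obtain p q where pq: "E p q" "{p,q} \<in> F" using cls_ne[OF F] by blast
  have "\<exists>p' q'. E p' q' \<and> {p',q'} \<in> F \<and> p' \<in> W1 \<and> q' \<in> W2"
  proof (cases "p \<in> W1")
    case True then show ?thesis using pq cut_cross[OF c pq] by blast
  next
    case False
    have pV: "p \<in> V" "q \<in> V" using EV pq(1) by blast+
    then have "p \<in> W2" using False cut_part[OF c] by blast
    then have "q \<notin> W2" using cut_cross[OF c pq] cut_part[OF c pV(1)] by blast
    then have "q \<in> W1" using cut_part[OF c pV(2)] by blast
    moreover have "E q p" "{q,p} \<in> F" using pq Esym by (auto simp: insert_commute)
    ultimately show ?thesis using \<open>p \<in> W2\<close> by blast
  qed
  then obtain p' q' where pq': "E p' q'" "{p',q'} \<in> F" "p' \<in> W1" "q' \<in> W2" by blast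
  have fp: "f p' = q'" using sw pq' by blast
  obtain w where w: "walk (del_edges E F) w" "set w \<subseteq> W1" "hd w = p'" "last w = x"
    using cut_walk[OF c pq'(3) x] by blast
  have nF: "\<forall>a\<in>set w. \<forall>b\<in>set w. del_edges E F a b \<longrightarrow> del_edges E F (f a) (f b)"
  proof (intro ballI impI)
    fix a b assume ab: "a \<in> set w" "b \<in> set w" "del_edges E F a b"
    then have eab: "E a b" "{a,b} \<notin> F" unfolding del_edges_def by simp_all
    have abV: "a \<in> V" "b \<in> V" using EV eab(1) by blast+
    have fabV: "f a \<in> V" "f b \<in> V" using aut_V[OF f] abV by blast+
    have efab: "E (f a) (f b)" using aut_E[OF f eab(1)] .
    have "{f a, f b} \<notin> F"
    proof
      assume inF: "{f a, f b} \<in> F"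
      then have h: "f (f a) = f b" "f (f b) = f a" using sw efab by blast+
      have "f a = b" using aut_inj[OF f fabV(1) abV(2) h(1)] .
      moreover have "f b = a" using aut_inj[OF f fabV(2) abV(1) h(2)] .
      ultimately have "{f a, f b} = {a,b}" by (simp add: insert_commute)
      then show False using inF eab(2) by simp
    qed
    then show "del_edges E F (f a) (f b)" using efab unfolding del_edges_def by simp
  qed
  have w2: "walk (del_edges E F) (map f w)" using walk_map[of "del_edges E F" w "del_edges E F" f] w(1) nF by blast
  have inv: "\<forall>u v. del_edges E F u v \<longrightarrow> (u \<in> W2 \<longleftrightarrow> v \<in> W2)"
    using cut_same[OF cut_sym[OF c]] unfolding del_edges_def by blast
  have "hd (map f w) \<in> W2 \<longleftrightarrow> last (map f w) \<in> W2" using walk_inv[OF w2 inv] .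
  moreover have "w \<noteq> []" using walk_nonempty w(1) by blast
  ultimately have "f p' \<in> W2 \<longleftrightarrow> f x \<in> W2" using w(3,4) by (simp add: hd_map last_map)
  then show ?thesis using fp pq'(4) by simp
qed

lemma uniq_le: assumes c: "cut F W1 W2 \<sigma>" and F: "F \<in> PP" and f: "graph_aut V E f" and g: "graph_aut V E g"
  and swf: "\<forall>a b. E a b \<and> {a,b} \<in> F \<longrightarrow> f a = b \<and> f b = a"
  and swg: "\<forall>a b. E a b \<and> {a,b} \<in> F \<longrightarrow> g a = b \<and> g b = a"
  and z: "z \<in> W2" and u: "u \<in> W2" shows "d u (f z) \<le> d u (g z)"
proof -
  have gz: "g z \<in> W1" using swap_side[OF cut_sym[OF c] F g swg z] .
  have zV: "z \<in> V" and uV: "u \<in> V" using z u cut_V[OF c] by blast+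
  have gzV: "g z \<in> V" "f z \<in> V" using aut_V f g zV by blast+
  obtain q where q: "wlk q u (g z) (d u (g z))" using d_ex[OF uV gzV(1)] by blast
  have "g z \<notin> W2" using gz cut_part[OF c gzV(1)] by blast
  moreover have qw: "walk E q" "hd q = u" "last q = g z" using q unfolding wlk_def by simp_all
  ultimately have "\<exists>q1 a b q2. q = q1 @ a # b # q2 \<and> a \<in> W2 \<and> b \<notin> W2"
    using walk_cross[of E q "\<lambda>x. x \<in> W2"] u by simp
  then obtain q1 a b q2 where qq: "q = q1 @ a # b # q2" "a \<in> W2" "b \<notin> W2" by blast
  have eab: "E a b" using q qq walk_mid unfolding wlk_def by metis
  have abV: "a \<in> V" "b \<in> V" using EV eab by blast+
  have abF: "{a,b} \<in> F" using cut_same[OF cut_sym[OF c] eab] qq by blast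
  have fa: "f a = b" and ga: "g a = b" using swf swg eab abF by blast+
  have "d b (f z) = d a z" using d_aut[OF f abV(1) zV] fa by simp
  moreover have "d b (g z) = d a z" using d_aut[OF g abV(1) zV] ga by simp
  moreover have "d u (f z) \<le> d u a + d a (f z)" using d_tri uV abV gzV by blast
  moreover have "d a (f z) \<le> d a b + d b (f z)" using d_tri uV abV gzV by blast
  moreover have "d a b = 1" using d_edge[OF eab] .
  moreover have "d u a + d b (g z) + 1 \<le> d u (g z)" using d_split q qq by blast
  ultimately show ?thesis by linarith
qed

lemma uniq_F: assumes F: "F \<in> PP" and f: "graph_aut V E f" and g: "graph_aut V E g"
  and swf: "\<forall>a b. E a b \<and> {a,b} \<in> F \<longrightarrow> f a = b \<and> f b = a"
  and swg: "\<forall>a b. E a b \<and> {a,b} \<in> F \<longrightarrow> g a = b \<and> g b = a"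
  and z: "z \<in> V" shows "f z = g z"
proof -
  obtain W1 W2 \<sigma> where c0: "cut F W1 W2 \<sigma>" "z \<in> W1" using cut_ex_at[OF F z] by blast
  have c: "cut F W2 W1 \<sigma>" using cut_sym[OF c0(1)] .
  have V: "f z \<in> V" "g z \<in> V" using aut_V f g z by blast+
  have "\<forall>u\<in>W1. d u (f z) = d u (g z)"
    using uniq_le[OF c F f g swf swg c0(2)] uniq_le[OF c F g f swg swf c0(2)] by (meson antisym)
  then show ?thesis using resolve[OF c F V] by blast
qed

definition Pm where "Pm x y f \<longleftrightarrow> f \<in> extensional V \<and> graph_aut V E f \<and>
   (\<forall>a b. E a b \<and> theta V E a b x y \<longrightarrow> f a = b \<and> f b = a)"

lemma mirror_ex1: assumes e: "E x y" shows "\<exists>!f. Pm x y f"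
proof -
  obtain F where F: "F \<in> PP" "{x,y} \<in> F" using cls_ex[OF e] by blast
  obtain W1 W2 \<sigma> where c: "cut F W1 W2 \<sigma>" using cut_ex[OF F(1)] by blast
  have th: "\<And>a b. E a b \<Longrightarrow> theta V E a b x y \<longleftrightarrow> {a,b} \<in> F" using theta_cls[OF F e] by blast
  have sw1: "\<forall>a b. E a b \<and> theta V E a b x y \<longrightarrow> restrict \<sigma> V a = b \<and> restrict \<sigma> V b = a"
  proof (intro allI impI)
    fix a b assume ab: "E a b \<and> theta V E a b x y"
    then have "{a,b} \<in> F" using th by blast
    then have "\<sigma> a = b \<and> \<sigma> b = a" using cut_swap[OF c] ab by blast
    moreover have "a \<in> V" "b \<in> V" using EV ab by blast+
    ultimately show "restrict \<sigma> V a = b \<and> restrict \<sigma> V b = a" by simp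
  qed
  have P1: "Pm x y (restrict \<sigma> V)"
    unfolding Pm_def using aut_restrict[OF cut_aut[OF c]] sw1 by simp
  have P2: "f = restrict \<sigma> V" if "Pm x y f" for f
  proof (rule ext)
    fix z
    have fe: "f \<in> extensional V" and fa: "graph_aut V E f"
      and fs: "\<forall>a b. E a b \<and> theta V E a b x y \<longrightarrow> f a = b \<and> f b = a" using that unfolding Pm_def by blast+
    show "f z = restrict \<sigma> V z"
    proof (cases "z \<in> V")
      case True
      have sf: "\<forall>a b. E a b \<and> {a,b} \<in> F \<longrightarrow> f a = b \<and> f b = a" using fs th by blast
      have ss: "\<forall>a b. E a b \<and> {a,b} \<in> F \<longrightarrow> \<sigma> a = b \<and> \<sigma> b = a" using cut_swap[OF c] by blast
      show ?thesis using uniq_F[OF F(1) fa cut_aut[OF c] sf ss True] True by simp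
    next
      case False then show ?thesis using fe by (simp add: extensional_def)
    qed
  qed
  show ?thesis using P1 P2 by blast
qed

lemma mirror_def2: "mirror_aut V E x y = (THE f. Pm x y f)"
  unfolding mirror_aut_def Pm_def by simp

lemma mirror_P: "E x y \<Longrightarrow> Pm x y (mirror_aut V E x y)"
  unfolding mirror_def2 by (rule theI'[OF mirror_ex1])

lemma mirror_U: "E x y \<Longrightarrow> Pm x y f \<Longrightarrow> f = mirror_aut V E x y"
  unfolding mirror_def2 by (rule the1_equality[OF mirror_ex1, symmetric])

lemma mir_aut: "E x y \<Longrightarrow> graph_aut V E (mirror_aut V E x y)"
  using mirror_P unfolding Pm_def by blast
lemma mir_ext: "E x y \<Longrightarrow> mirror_aut V E x y \<in> extensional V"
  using mirror_P unfolding Pm_def by blast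
lemma mir_swap: "E x y \<Longrightarrow> E a b \<Longrightarrow> theta V E a b x y \<Longrightarrow>
    mirror_aut V E x y a = b \<and> mirror_aut V E x y b = a"
  using mirror_P unfolding Pm_def by blast

lemma theta_refl: assumes "E x y" shows "theta V E x y x y"
proof -
  have "x \<in> V" "y \<in> V" using assms EV by blast+
  then show ?thesis unfolding theta_def using d_refl d_edge[OF assms] d_edge[OF Esym[OF assms]] by simp
qed

lemma mir_xy: "E x y \<Longrightarrow> mirror_aut V E x y x = y \<and> mirror_aut V E x y y = x"
  using mir_swap theta_refl by blast

lemma mir_invol: assumes e: "E x y" and z: "z \<in> V" shows "mirror_aut V E x y (mirror_aut V E x y z) = z"
proof -
  let ?M = "mirror_aut V E x y"
  let ?g = "restrict (inv_into V ?M) V"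
  have Ma: "graph_aut V E ?M" using mir_aut[OF e] .
  have sw: "\<forall>a b. E a b \<and> theta V E a b x y \<longrightarrow> ?g a = b \<and> ?g b = a"
  proof (intro allI impI)
    fix a b assume ab: "E a b \<and> theta V E a b x y"
    then have s: "?M a = b" "?M b = a" using mir_swap[OF e] by blast+
    have abV: "a \<in> V" "b \<in> V" using EV ab by blast+
    show "?g a = b \<and> ?g b = a" using aut_inv_l[OF Ma abV(1)] aut_inv_l[OF Ma abV(2)] s abV by simp
  qed
  have "Pm x y ?g" unfolding Pm_def using aut_inv[OF Ma] sw by simp
  then have g: "?g = ?M" using mirror_U[OF e] by blast
  have "?M z \<in> V" using aut_V[OF Ma z] .
  then have "?g (?M z) = z" using aut_inv_l[OF Ma z] by simp
  then show ?thesis using g by simp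
qed

lemma mir_Bij: "E x y \<Longrightarrow> mirror_aut V E x y \<in> Bij V"
  unfolding Bij_def using mir_ext mir_aut aut_bij by blast

lemma theta_aut: assumes g: "graph_aut V E g" and "a \<in> V" "b \<in> V" "x \<in> V" "y \<in> V"
  shows "theta V E (g a) (g b) (g x) (g y) \<longleftrightarrow> theta V E a b x y"
  unfolding theta_def using d_aut[OF g] assms by simp

lemma mir_conj: assumes g: "graph_aut V E g" and e: "E x y"
  shows "mirror_aut V E (g x) (g y) = restrict (\<lambda>z. g (mirror_aut V E x y (inv_into V g z))) V"
proof -
  let ?M = "mirror_aut V E x y"
  let ?h = "restrict (\<lambda>z. g (?M (inv_into V g z))) V"
  have Ma: "graph_aut V E ?M" using mir_aut[OF e] .
  have gi: "graph_aut V E (restrict (inv_into V g) V)" using aut_inv[OF g] .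
  have ge: "E (g x) (g y)" using aut_E[OF g e] .
  have a1: "graph_aut V E (restrict (\<lambda>z. ?M (restrict (inv_into V g) V z)) V)" using aut_comp[OF Ma gi] .
  have a2: "graph_aut V E (restrict (\<lambda>z. g (restrict (\<lambda>z. ?M (restrict (inv_into V g) V z)) V z)) V)"
    using aut_comp[OF g a1] .
  have ha: "graph_aut V E ?h" by (rule aut_cong[OF a2]) simp
  have sw: "\<forall>c w. E c w \<and> theta V E c w (g x) (g y) \<longrightarrow> ?h c = w \<and> ?h w = c"
  proof (intro allI impI)
    fix c w assume cw: "E c w \<and> theta V E c w (g x) (g y)"
    have cwV: "c \<in> V" "w \<in> V" using EV cw by blast+
    define c' where "c' = inv_into V g c"
    define w' where "w' = inv_into V g w"
    have c'V: "c' \<in> V" "w' \<in> V" unfolding c'_def w'_def using aut_inv_V[OF g] cwV by blast+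
    have gc: "g c' = c" "g w' = w" unfolding c'_def w'_def using aut_inv_r[OF g] cwV by blast+
    have ec: "E c' w'" using aut_E_iff[OF g c'V] cw gc by simp
    have xyV: "x \<in> V" "y \<in> V" using EV e by blast+
    have "theta V E c' w' x y" using theta_aut[OF g c'V xyV] cw gc by simp
    then have s: "?M c' = w'" "?M w' = c'" using mir_swap[OF e ec] by blast+
    show "?h c = w \<and> ?h w = c" using cwV s gc unfolding c'_def w'_def by simp
  qed
  have "Pm (g x) (g y) ?h" unfolding Pm_def using ha sw by simp
  then show ?thesis using mirror_U[OF ge] by simp
qed

end

context cg begin
lemma aut_id: "graph_aut V E id" unfolding graph_aut_def by simp
lemma aut_o: assumes "graph_aut V E f" "graph_aut V E g" shows "graph_aut V E (f \<circ> g)"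
  by (rule aut_cong[OF aut_comp[OF assms]]) simp
end

locale mgv = mg +
  fixes v :: 'a and k :: nat and nb :: "nat \<Rightarrow> 'a"
  assumes vV: "v \<in> V" and nbb: "bij_betw nb {..<k} {u. E v u}"
begin

definition al where "al i = mirror_aut V E v (nb i)"
definition evf where "evf w = foldr (\<lambda>i f. al i \<circ> f) w id"
definition wd where "wd w \<longleftrightarrow> set w \<subseteq> {..<k}"
definition st where "st w j = evf (take j w) v"
definition red where "red w \<longleftrightarrow> d v (evf w v) = length w"

lemma wd_Nil[simp]: "wd []" unfolding wd_def by simp
lemma wd_Cons[simp]: "wd (i # w) \<longleftrightarrow> i < k \<and> wd w" unfolding wd_def by simp
lemma wd_app[simp]: "wd (a @ b) \<longleftrightarrow> wd a \<and> wd b" unfolding wd_def by auto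
lemma wd_rev[simp]: "wd (rev w) \<longleftrightarrow> wd w" unfolding wd_def by simp
lemma wd_take: "wd w \<Longrightarrow> wd (take j w)" unfolding wd_def by (meson order_trans set_take_subset)
lemma wd_drop: "wd w \<Longrightarrow> wd (drop j w)" unfolding wd_def by (meson order_trans set_drop_subset)
lemma wd_nth: "wd w \<Longrightarrow> j < length w \<Longrightarrow> w ! j < k" unfolding wd_def using nth_mem by blast

lemma nbE: "i < k \<Longrightarrow> E v (nb i)" using nbb unfolding bij_betw_def by blast
lemma nb_surj: "E v u \<Longrightarrow> \<exists>i<k. u = nb i" using nbb unfolding bij_betw_def by blast
lemma nb_inj: "i < k \<Longrightarrow> j < k \<Longrightarrow> nb i = nb j \<Longrightarrow> i = j"
  using nbb unfolding bij_betw_def inj_on_def by blast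

lemma al_aut: "i < k \<Longrightarrow> graph_aut V E (al i)" unfolding al_def using mir_aut nbE by blast
lemma al_v: "i < k \<Longrightarrow> al i v = nb i" unfolding al_def using mir_xy nbE by blast
lemma al_nb: "i < k \<Longrightarrow> al i (nb i) = v" unfolding al_def using mir_xy nbE by blast
lemma al_inv: "i < k \<Longrightarrow> z \<in> V \<Longrightarrow> al i (al i z) = z" unfolding al_def using mir_invol nbE by blast
lemma al_V: "i < k \<Longrightarrow> z \<in> V \<Longrightarrow> al i z \<in> V" using aut_V al_aut by blast
lemma al_ext: "i < k \<Longrightarrow> al i \<in> extensional V" unfolding al_def using mir_ext nbE by blast

lemma evf_Nil[simp]: "evf [] = id" unfolding evf_def by simp
lemma evf_Cons[simp]: "evf (i # w) = al i \<circ> evf w" unfolding evf_def by simp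
lemma evf_app: "evf (a @ b) = evf a \<circ> evf b"
  by (induction a) (simp_all add: comp_assoc)
lemma evf_app_pt: "evf (a @ b) z = evf a (evf b z)" by (simp add: evf_app)

lemma evf_V: "wd w \<Longrightarrow> z \<in> V \<Longrightarrow> evf w z \<in> V"
  by (induction w) (simp_all add: al_V)

lemma evf_aut: "wd w \<Longrightarrow> graph_aut V E (evf w)"
proof (induction w)
  case Nil show ?case unfolding evf_Nil by (rule aut_id)
next
  case (Cons i w)
  have iw: "i < k" "wd w" using Cons.prems by simp_all
  have "graph_aut V E (al i \<circ> evf w)" using aut_o[OF al_aut[OF iw(1)] Cons.IH[OF iw(2)]] .
  then show ?case by (simp only: evf_Cons)
qed

lemma evf_rev: "wd w \<Longrightarrow> z \<in> V \<Longrightarrow> evf (rev w) (evf w z) = z"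
proof (induction w arbitrary: z)
  case Nil then show ?case by simp
next
  case (Cons i w)
  have "evf (rev (i # w)) (evf (i # w) z) = evf (rev w) (al i (al i (evf w z)))"
    by (simp add: evf_app)
  also have "\<dots> = evf (rev w) (evf w z)" using Cons.prems al_inv evf_V by simp
  also have "\<dots> = z" using Cons by simp
  finally show ?case .
qed

lemma evf_rev2: "wd w \<Longrightarrow> z \<in> V \<Longrightarrow> evf w (evf (rev w) z) = z"
  using evf_rev[of "rev w" z] by simp

lemma evf_inj: "wd w \<Longrightarrow> x \<in> V \<Longrightarrow> y \<in> V \<Longrightarrow> evf w x = evf w y \<Longrightarrow> x = y"
  using evf_rev by metis

lemma d_evf: "wd w \<Longrightarrow> x \<in> V \<Longrightarrow> y \<in> V \<Longrightarrow> d (evf w x) (evf w y) = d x y"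
  using d_aut evf_aut by blast

lemma st_0[simp]: "st w 0 = v" unfolding st_def by simp
lemma st_len: "st w (length w) = evf w v" unfolding st_def by simp

lemma st_Suc: assumes w: "wd w" and j: "j < length w" shows "st w (Suc j) = evf (take j w) (nb (w ! j))"
proof -
  have "take (Suc j) w = take j w @ [w ! j]" using j by (simp add: take_Suc_conv_app_nth)
  then show ?thesis unfolding st_def using al_v[OF wd_nth[OF w j]] by (simp add: evf_app)
qed

lemma st_edge: assumes "wd w" "j < length w" shows "E (st w j) (st w (Suc j))"
proof -
  have "E v (nb (w ! j))" using nbE wd_nth assms by blast
  then have "E (evf (take j w) v) (evf (take j w) (nb (w ! j)))"
    using aut_E evf_aut wd_take assms by blast
  then show ?thesis using st_Suc[OF assms] unfolding st_def by simp
qed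

lemma st_V: "wd w \<Longrightarrow> st w j \<in> V" unfolding st_def using evf_V wd_take vV by blast

lemma cross: assumes w: "wd w" and e: "E x y" and a: "a \<le> length w"
  and ne: "side x y (st w a) \<noteq> side x y (evf w v)"
  shows "\<exists>j. a \<le> j \<and> j < length w \<and> theta V E (st w j) (st w (Suc j)) x y"
proof -
  have "(\<lambda>j. side x y (st w j)) a \<noteq> (\<lambda>j. side x y (st w j)) (length w)" using ne st_len by simp
  then obtain j where j: "a \<le> j" "j < length w" "side x y (st w j) \<noteq> side x y (st w (Suc j))"
    using idx_cross[OF a, of "\<lambda>j. side x y (st w j)"] by blast
  have "theta V E (st w j) (st w (Suc j)) x y" using theta_side[OF st_edge[OF w j(2)] e] j(3) by blast
  then show ?thesis using j by blast
qed

lemma step_mirror: assumes w: "wd w" and j: "j < length w" and z: "z \<in> V"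
  shows "mirror_aut V E (st w j) (st w (Suc j)) (evf w z) = evf (take j w @ drop (Suc j) w) z"
proof -
  let ?T = "evf (take j w)" and ?i = "w ! j" and ?R = "evf (drop (Suc j) w)"
  have i: "?i < k" using wd_nth w j by blast
  have Ta: "graph_aut V E ?T" using evf_aut wd_take w by blast
  have wsplit: "w = take j w @ [?i] @ drop (Suc j) w" using j by (simp add: id_take_nth_drop)
  have ev: "evf w z = ?T (al ?i (?R z))" by (subst wsplit) (simp add: evf_app)
  have RV: "?R z \<in> V" using evf_V wd_drop w z by blast
  have aRV: "al ?i (?R z) \<in> V" using al_V[OF i RV] .
  have "mirror_aut V E (st w j) (st w (Suc j)) = mirror_aut V E (?T v) (?T (nb ?i))"
    using st_Suc[OF w j] unfolding st_def by simp
  also have "\<dots> = restrict (\<lambda>z. ?T (mirror_aut V E v (nb ?i) (inv_into V ?T z))) V"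
    using mir_conj[OF Ta nbE[OF i]] .
  finally have M: "mirror_aut V E (st w j) (st w (Suc j)) = restrict (\<lambda>z. ?T (al ?i (inv_into V ?T z))) V"
    unfolding al_def .
  have evV: "evf w z \<in> V" using evf_V w z by blast
  have "mirror_aut V E (st w j) (st w (Suc j)) (evf w z) = ?T (al ?i (inv_into V ?T (?T (al ?i (?R z)))))"
    using M evV ev by simp
  also have "\<dots> = ?T (al ?i (al ?i (?R z)))" using aut_inv_l[OF Ta aRV] by simp
  also have "\<dots> = ?T (?R z)" using al_inv[OF i RV] by simp
  finally show ?thesis by (simp add: evf_app)
qed

lemma free: "wd w \<Longrightarrow> evf w v = v \<Longrightarrow> z \<in> V \<Longrightarrow> evf w z = z"
proof (induction "length w" arbitrary: w z rule: less_induct)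
  case less
  show ?case
  proof (cases w)
    case Nil then show ?thesis by simp
  next
    case (Cons s w')
    have s: "s < k" "wd w'" using less.prems Cons by simp_all
    have len: "1 \<le> length w" using Cons by simp
    have st1: "st w 1 = nb s" unfolding st_def using Cons al_v[OF s(1)] by simp
    have e: "E v (nb s)" using nbE[OF s(1)] .
    have "side v (nb s) (st w 1) \<noteq> side v (nb s) (evf w v)"
      using st1 less.prems(2) d_refl[OF vV] d_refl EV[OF e] d_edge[OF e] d_edge[OF Esym[OF e]]
      unfolding side_def by simp
    then obtain j where j: "1 \<le> j" "j < length w" "theta V E (st w j) (st w (Suc j)) v (nb s)"
      using cross[OF less.prems(1) e len] by blast
    have M: "mirror_aut V E (st w j) (st w (Suc j)) = al s"
      unfolding al_def using mirror_const[OF st_edge[OF less.prems(1) j(2)] e j(3)] .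
    define w3 where "w3 = take (j - 1) w' @ drop j w'"
    have w3: "take j w @ drop (Suc j) w = s # w3" unfolding w3_def using Cons j(1)
      by (cases j) simp_all
    have wd3: "wd w3" unfolding w3_def using s(2) wd_take wd_drop by simp
    have l3: "length w3 < length w" unfolding w3_def using Cons j by simp
    have key: "evf w y = evf w3 y" if y: "y \<in> V" for y
    proof -
      have "al s (evf w y) = al s (evf w3 y)"
        using step_mirror[OF less.prems(1) j(2) y] M w3 by simp
      moreover have "evf w y \<in> V" "evf w3 y \<in> V" using evf_V less.prems(1) wd3 y by blast+
      ultimately show ?thesis using al_inv[OF s(1)] by metis
    qed
    have "evf w3 v = v" using key[OF vV] less.prems(2) by simp
    then have "evf w3 z = z" using less.hyps[OF l3 wd3] less.prems(3) by blast
    then show ?thesis using key less.prems(3) by simp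
  qed
qed

lemma R6: assumes "wd w" "wd w'" "evf w v = evf w' v" "z \<in> V" shows "evf w z = evf w' z"
proof -
  have "evf (rev w' @ w) v = v" using assms evf_rev vV by (simp add: evf_app)
  then have "evf (rev w' @ w) (evf w' z) = evf w' z" using free assms evf_V by simp
  have "evf (rev w') (evf w z) = z" using free[of "rev w' @ w" z] assms \<open>evf (rev w' @ w) v = v\<close>
    by (simp add: evf_app)
  then have "evf w' (evf (rev w') (evf w z)) = evf w' z" by simp
  then show ?thesis using evf_rev2[of w' "evf w z"] evf_V assms by simp
qed

lemma G1: "wd w \<Longrightarrow> d v (evf w v) \<le> length w"
proof (induction w)
  case Nil then show ?case using d_refl vV by simp
next
  case (Cons i w)
  have i: "i < k" "wd w" using Cons by simp_all
  have yV: "evf w v \<in> V" using evf_V i vV by blast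
  have "d v (al i (evf w v)) \<le> d v (al i v) + d (al i v) (al i (evf w v))"
    using d_tri vV al_V i yV by blast
  also have "\<dots> = 1 + d v (evf w v)" using d_aut[OF al_aut[OF i(1)] vV yV] al_v[OF i(1)] d_edge[OF nbE[OF i(1)]] by simp
  finally show ?case using Cons by simp
qed

lemma dal: assumes i: "i < k" and y: "y \<in> V" shows "d v (al i y) = d (nb i) y"
proof -
  have "d (al i v) (al i (al i y)) = d v (al i y)" using d_aut[OF al_aut[OF i] vV al_V[OF i y]] .
  then show ?thesis using al_v[OF i] al_inv[OF i y] by simp
qed

lemma Bp: assumes i: "i < k" and y: "y \<in> V"
  shows "d v (al i y) = Suc (d v y) \<or> d v y = Suc (d v (al i y))"
proof -
  have "d y (nb i) = Suc (d y v) \<or> d y v = Suc (d y (nb i))" using B[OF nbE[OF i] y] .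
  moreover have "d y (nb i) = d (nb i) y" "d y v = d v y" using d_sym y vV EV[OF nbE[OF i]] by blast+
  ultimately show ?thesis using dal[OF i y] by simp
qed

lemma red_app: assumes "wd a" "wd b" "red (a @ b)" shows "red a" "red b"
proof -
  have aV: "evf a v \<in> V" and bV: "evf b v \<in> V" using evf_V assms vV by blast+
  have "d v (evf (a @ b) v) \<le> d v (evf a v) + d (evf a v) (evf a (evf b v))"
    using d_tri vV aV evf_V assms bV by (simp add: evf_app)
  also have "d (evf a v) (evf a (evf b v)) = d v (evf b v)" using d_evf assms vV bV by blast
  finally have le: "length a + length b \<le> d v (evf a v) + d v (evf b v)" using assms(3) unfolding red_def by simp
  show "red a" "red b" using le G1[OF assms(1)] G1[OF assms(2)] unfolding red_def by simp_all
qed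

lemma R5: "u \<in> V \<Longrightarrow> \<exists>w. wd w \<and> evf w v = u \<and> length w = d v u"
proof (induction "d v u" arbitrary: u)
  case 0
  then have "u = v" using d_eq0 vV by metis
  then show ?case using d_refl[OF vV] by (intro exI[of _ "[]"]) simp
next
  case (Suc n)
  obtain x where x: "E x u" "d v x = n" using nb_closer[OF vV Suc.prems Suc.hyps(2)[symmetric]] by blast
  have xV: "x \<in> V" using EV x(1) by blast
  have "\<exists>w. wd w \<and> evf w v = x \<and> length w = d v x" using Suc.hyps(1)[of x] x(2) xV by simp
  then obtain w where w: "wd w" "evf w v = x" "length w = n" using x(2) by blast
  have ga: "graph_aut V E (evf (rev w))" using evf_aut w(1) by simp
  have "E (evf (rev w) x) (evf (rev w) u)" using aut_E[OF ga x(1)] .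
  moreover have "evf (rev w) x = v" using evf_rev[OF w(1) vV] w(2) by simp
  ultimately have "E v (evf (rev w) u)" by simp
  then obtain i where i: "i < k" "evf (rev w) u = nb i" using nb_surj by blast
  have "evf (w @ [i]) v = evf w (nb i)" using al_v[OF i(1)] by (simp add: evf_app)
  also have "\<dots> = u" using i(2) evf_rev2 w(1) Suc.prems by metis
  finally show ?case using w i Suc.hyps(2) by (intro exI[of _ "w @ [i]"]) simp
qed

lemma EX: assumes w: "wd w" and s: "s < k" and lt: "d v (al s (evf w v)) < d v (evf w v)"
  shows "\<exists>j<length w. mirror_aut V E (st w j) (st w (Suc j)) = al s"
proof -
  have e: "E v (nb s)" using nbE[OF s] .
  have gV: "evf w v \<in> V" using evf_V w vV by blast
  have "d (evf w v) (nb s) = d v (al s (evf w v))" using dal[OF s gV] d_sym gV EV[OF e] by simp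
  then have "\<not> side v (nb s) (evf w v)" using lt d_sym[OF gV vV] unfolding side_def by simp
  moreover have "side v (nb s) (st w 0)" unfolding side_def using d_refl vV d_edge[OF e] by simp
  ultimately obtain j where j: "j < length w" "theta V E (st w j) (st w (Suc j)) v (nb s)"
    using cross[OF w e, of 0] by auto
  then show ?thesis using mirror_const[OF st_edge[OF w j(1)] e j(2)] unfolding al_def by blast
qed

end

fun alt :: "nat \<Rightarrow> nat \<Rightarrow> nat \<Rightarrow> nat list" where
  "alt s t 0 = []"
| "alt s t (Suc n) = s # alt t s n"

lemma alt_len[simp]: "length (alt s t n) = n"
  by (induction n arbitrary: s t) simp_all

lemma alt_set: "set (alt s t n) \<subseteq> {s, t}"
  by (induction n arbitrary: s t) auto

lemma alt_snoc: "alt s t n @ [if even n then s else t] = alt s t (Suc n)"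
proof (induction n arbitrary: s t)
  case 0 then show ?case by simp
next
  case (Suc n)
  have e: "(if even (Suc n) then s else t) = (if even n then t else s)" by simp
  have "alt s t (Suc n) @ [if even (Suc n) then s else t] = s # (alt t s n @ [if even n then t else s])"
    by (simp only: e alt.simps append_Cons)
  also have "\<dots> = s # alt t s (Suc n)" using Suc.IH[of t s] by simp
  finally show ?case by simp
qed

lemma alt_take: "j \<le> n \<Longrightarrow> take j (alt s t n) = alt s t j"
proof (induction n arbitrary: s t j)
  case 0 then show ?case by simp
next
  case (Suc n) then show ?case by (cases j) simp_all
qed

lemma alt_nth: "j < n \<Longrightarrow> alt s t n ! j = (if even j then s else t)"
proof (induction n arbitrary: s t j)
  case 0 then show ?case by simp
next
  case (Suc n)
  show ?case
  proof (cases j)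
    case 0 then show ?thesis by simp
  next
    case (Suc j')
    then have "alt s t (Suc n) ! j = alt t s n ! j'" by simp
    also have "\<dots> = (if even j' then t else s)" using Suc.IH[of j' t s] Suc.prems \<open>j = Suc j'\<close> by simp
    finally show ?thesis using \<open>j = Suc j'\<close> by simp
  qed
qed

lemma alt_pal: "alt t s i @ [if even i then t else s] @ rev (alt t s i) = alt t s (2 * i + 1)"
proof (induction i arbitrary: s t)
  case 0 then show ?case by simp
next
  case (Suc i)
  have eq2: "2 * Suc i + 1 = Suc (2 * i + 2)" by simp
  have "alt t s (Suc i) @ [if even (Suc i) then t else s] @ rev (alt t s (Suc i))
      = t # (alt s t i @ [if even i then s else t] @ rev (alt s t i)) @ [t]" by simp
  also have "\<dots> = t # alt s t (2 * i + 1) @ [t]" using Suc by simp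
  also have "\<dots> = alt t s (2 * i + 2) @ [t]" by simp
  also have "\<dots> = alt t s (Suc (2 * i + 2))"
  proof -
    have ev: "even (2 * i + 2)" by simp
    show ?thesis using alt_snoc[of t s "2 * i + 2"] by (simp only: if_P[OF ev])
  qed
  finally show ?case by (simp only: eq2)
qed

lemma alt_double: "alt s t (2 * n) = concat (replicate n [s, t])"
  by (induction n) simp_all

lemma alt_app: "alt s t a @ (if even a then alt s t b else alt t s b) = alt s t (a + b)"
proof (induction a arbitrary: s t)
  case 0 then show ?case by simp
next
  case (Suc a)
  have "alt s t (Suc a) @ (if even (Suc a) then alt s t b else alt t s b)
     = s # (alt t s a @ (if even a then alt t s b else alt s t b))" by simp
  also have "\<dots> = s # alt t s (a + b)" using Suc by simp
  finally show ?case by simp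
qed

lemma alt_rev: "rev (alt t s n) = (if even n then alt s t n else alt t s n)"
proof (induction n arbitrary: s t)
  case 0 then show ?case by simp
next
  case (Suc n)
  have "rev (alt t s (Suc n)) = rev (alt s t n) @ [t]" by simp
  also have "\<dots> = (if even n then alt t s n else alt s t n) @ [t]" using Suc by simp
  also have "\<dots> = (if even (Suc n) then alt s t (Suc n) else alt t s (Suc n))"
    using alt_snoc[of t s n] alt_snoc[of s t n] by auto
  finally show ?case .
qed

lemma alt_braidw: "alt s t m @ rev (alt t s m) = alt s t (2 * m)"
  using alt_app[of s t m m] alt_rev[of t s m] by (cases "even m") (simp_all add: mult_2)

context mgv begin

abbreviation AA where "AA \<equiv> mirror_group V E"
definition ev where "ev w = restrict (evf w) V"

lemma AA_group: "group AA"
  unfolding mirror_group_def by (rule group.group_subgroup_generated[OF group_BijGroup])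

lemma carrier_AA: "carrier AA = generate (BijGroup V) (Bij V \<inter> mirror_auts V E)"
  unfolding mirror_group_def carrier_subgroup_generated by (simp add: BijGroup_def)

lemma mult_AA: "x \<in> Bij V \<Longrightarrow> y \<in> Bij V \<Longrightarrow> x \<otimes>\<^bsub>AA\<^esub> y = compose V x y"
  unfolding mirror_group_def mult_subgroup_generated by (simp add: BijGroup_def)

lemma one_AA: "\<one>\<^bsub>AA\<^esub> = (\<lambda>x\<in>V. x)"
  unfolding mirror_group_def one_subgroup_generated by (simp add: BijGroup_def)

lemma AA_sub: "carrier AA \<subseteq> Bij V"
  using group.carrier_subgroup_generated_subset[OF group_BijGroup]
  unfolding mirror_group_def by (simp add: BijGroup_def)

lemma ev_Bij: assumes "wd w" shows "ev w \<in> Bij V"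
proof -
  have "bij_betw (evf w) V V" using aut_bij evf_aut assms by blast
  then have "bij_betw (ev w) V V" unfolding ev_def by (rule bij_betw_cong[THEN iffD1, rotated]) simp
  then show ?thesis unfolding Bij_def ev_def by simp
qed

lemma ev_mult: assumes "wd a" "wd b" shows "ev a \<otimes>\<^bsub>AA\<^esub> ev b = ev (a @ b)"
proof -
  have "compose V (ev a) (ev b) = ev (a @ b)"
    unfolding compose_def ev_def by (rule restrict_ext) (simp add: evf_app evf_V assms)
  then show ?thesis using mult_AA ev_Bij assms by simp
qed

lemma ev_Nil: "ev [] = \<one>\<^bsub>AA\<^esub>" unfolding ev_def one_AA by (simp add: id_def)

lemma ev_single: assumes "i < k" shows "ev [i] = al i"
proof -
  have "ev [i] = restrict (al i) V" unfolding ev_def by simp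
  then show ?thesis using extensional_restrict[OF al_ext[OF assms]] by simp
qed

lemma al_gen: assumes "i < k" shows "al i \<in> Bij V \<inter> mirror_auts V E"
proof -
  have "al i \<in> Bij V" unfolding al_def using mir_Bij nbE assms by blast
  moreover have "al i \<in> mirror_auts V E" unfolding al_def mirror_auts_def using nbE assms by blast
  ultimately show ?thesis by blast
qed

lemma ev_carrier: "wd w \<Longrightarrow> ev w \<in> carrier AA"
proof (induction w)
  case Nil then show ?case using ev_Nil monoid.one_closed[OF group.is_monoid[OF AA_group]] by simp
next
  case (Cons i w)
  have iw: "i < k" "wd w" using Cons.prems by simp_all
  have "al i \<in> carrier AA" unfolding carrier_AA using generate.incl[OF al_gen[OF iw(1)]] .
  then have "ev [i] \<otimes>\<^bsub>AA\<^esub> ev w \<in> carrier AA"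
    using ev_single[OF iw(1)] Cons.IH[OF iw(2)] monoid.m_closed[OF group.is_monoid[OF AA_group]] by simp
  then show ?case using ev_mult[of "[i]" w] iw by simp
qed

lemma al_carrier: "i < k \<Longrightarrow> al i \<in> carrier AA"
  using ev_carrier[of "[i]"] ev_single by simp

lemma ev_eq: "ev a = ev b \<longleftrightarrow> (\<forall>z\<in>V. evf a z = evf b z)"
  unfolding ev_def by (metis restrict_apply' restrict_ext)

lemma ev_eq_vertex: "wd a \<Longrightarrow> wd b \<Longrightarrow> ev a = ev b \<longleftrightarrow> evf a v = evf b v"
  using ev_eq R6 vV by blast

lemma pow_ev: assumes "s < k" "t < k"
  shows "(al s \<otimes>\<^bsub>AA\<^esub> al t) [^]\<^bsub>AA\<^esub> n = ev (concat (replicate n [s, t]))"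
proof (induction n)
  case 0 then show ?case using ev_Nil by simp
next
  case (Suc n)
  have st: "al s \<otimes>\<^bsub>AA\<^esub> al t = ev [s, t]" using ev_mult[of "[s]" "[t]"] ev_single assms by simp
  have c: "al s \<otimes>\<^bsub>AA\<^esub> al t \<in> carrier AA" using st ev_carrier assms by simp
  have "(al s \<otimes>\<^bsub>AA\<^esub> al t) [^]\<^bsub>AA\<^esub> Suc n = (al s \<otimes>\<^bsub>AA\<^esub> al t) \<otimes>\<^bsub>AA\<^esub> (al s \<otimes>\<^bsub>AA\<^esub> al t) [^]\<^bsub>AA\<^esub> n"
    using monoid.nat_pow_Suc2[OF group.is_monoid[OF AA_group] c] .
  also have "\<dots> = ev ([s, t] @ concat (replicate n [s, t]))"
    using Suc st ev_mult assms set_concat by (simp add: wd_def)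
  finally show ?case by simp
qed

definition mm where "mm i j = (if i = j then 1 else group.ord AA (al i \<otimes>\<^bsub>AA\<^esub> al j))"

lemma finite_AA: "finite (carrier AA)"
proof -
  have s1: "Bij V \<subseteq> (\<Pi>\<^sub>E i\<in>V. V)" unfolding Bij_def by (auto simp: bij_betw_def extensional_def)
  have f: "finite (\<Pi>\<^sub>E i\<in>V. V)" by (rule finite_PiE) (rule finV)+
  have "carrier AA \<subseteq> (\<Pi>\<^sub>E i\<in>V. V)" using AA_sub s1 by (rule subset_trans)
  then show ?thesis using f by (rule finite_subset)
qed

lemma rr_carrier: "s < k \<Longrightarrow> t < k \<Longrightarrow> al s \<otimes>\<^bsub>AA\<^esub> al t \<in> carrier AA"
  using monoid.m_closed[OF group.is_monoid[OF AA_group]] al_carrier by blast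

lemma mm_pos: "s < k \<Longrightarrow> t < k \<Longrightarrow> 1 \<le> mm s t"
  unfolding mm_def using group.ord_ge_1[OF AA_group finite_AA rr_carrier] by simp

lemma mm_pow: assumes "s < k" "t < k" "s \<noteq> t"
  shows "ev (concat (replicate n [s, t])) = \<one>\<^bsub>AA\<^esub> \<longleftrightarrow> mm s t dvd n"
  using group.pow_eq_id[OF AA_group rr_carrier[OF assms(1,2)], of n] pow_ev[OF assms(1,2)] assms(3)
  unfolding mm_def by simp

lemma mm_pow_id: assumes "s < k" "t < k" "z \<in> V"
  shows "evf (concat (replicate (mm s t) [s, t])) z = z"
proof (cases "s = t")
  case True then show ?thesis unfolding mm_def using al_inv assms by simp
next
  case False
  have "ev (concat (replicate (mm s t) [s, t])) = \<one>\<^bsub>AA\<^esub>" using mm_pow[OF assms(1,2) False] by simp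
  then show ?thesis using assms(3) unfolding ev_def one_AA by (metis restrict_apply')
qed

lemma al_al: assumes i: "i < k" shows "al i \<otimes>\<^bsub>AA\<^esub> al i = \<one>\<^bsub>AA\<^esub>"
proof -
  have "ev [i,i] = ev []" unfolding ev_eq using al_inv[OF i] by simp
  moreover have "al i \<otimes>\<^bsub>AA\<^esub> al i = ev [i,i]" using ev_mult[of "[i]" "[i]"] ev_single[OF i] i by simp
  ultimately show ?thesis using ev_Nil by simp
qed

lemma mm_sym: assumes "s < k" "t < k" shows "mm s t = mm t s"
proof (cases "s = t")
  case True then show ?thesis by simp
next
  case False
  have G: "group AA" by (rule AA_group)
  have c: "al s \<in> carrier AA" "al t \<in> carrier AA" using al_carrier assms by blast+
  have iv: "inv\<^bsub>AA\<^esub> (al s) = al s" "inv\<^bsub>AA\<^esub> (al t) = al t"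
    using group.inv_equality[OF G al_al] c assms by blast+
  have "inv\<^bsub>AA\<^esub> (al s \<otimes>\<^bsub>AA\<^esub> al t) = al t \<otimes>\<^bsub>AA\<^esub> al s"
    using group.inv_mult_group[OF G c] iv by simp
  then have "group.ord AA (al t \<otimes>\<^bsub>AA\<^esub> al s) = group.ord AA (al s \<otimes>\<^bsub>AA\<^esub> al t)"
    using group.ord_inv[OF G rr_carrier[OF assms]] by simp
  then show ?thesis unfolding mm_def using False by simp
qed

lemma evf_conj: assumes "wd a" "i < k" "z \<in> V"
  shows "evf a (al i (inv_into V (evf a) z)) = evf (a @ [i] @ rev a) z"
proof -
  have "inv_into V (evf a) z = evf (rev a) z"
  proof -
    have "evf a (inv_into V (evf a) z) = z" using aut_inv_r[OF evf_aut[OF assms(1)] assms(3)] .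
    moreover have "evf a (evf (rev a) z) = z" using evf_rev2 assms by blast
    moreover have "inv_into V (evf a) z \<in> V" using aut_inv_V[OF evf_aut[OF assms(1)] assms(3)] .
    moreover have "evf (rev a) z \<in> V" using evf_V assms by simp
    ultimately show ?thesis using evf_inj[OF assms(1)] by metis
  qed
  then show ?thesis by (simp add: evf_app)
qed

lemma AL: assumes st: "s < k" "t < k" "s \<noteq> t" and i: "i < N" "Suc i < mm s t"
  shows "mirror_aut V E (st (alt t s N) i) (st (alt t s N) (Suc i)) \<noteq> al s"
proof
  assume eq: "mirror_aut V E (st (alt t s N) i) (st (alt t s N) (Suc i)) = al s"
  let ?w = "alt t s N"
  have wdw: "wd ?w" using alt_set[of t s N] st unfolding wd_def by auto
  have wdi: "wd (alt t s i)" using alt_set[of t s i] st unfolding wd_def by auto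
  have x: "?w ! i < k" using wd_nth[OF wdw] i by simp
  let ?x = "?w ! i"
  have tk: "take i ?w = alt t s i" using alt_take i by simp
  have "?x = (if even i then t else s)" using alt_nth i by simp
  then have pal: "alt t s i @ [?x] @ rev (alt t s i) = alt t s (2 * i + 1)" using alt_pal by simp
  have M: "mirror_aut V E (st ?w i) (st ?w (Suc i))
      = restrict (\<lambda>z. evf (alt t s i) (al ?x (inv_into V (evf (alt t s i)) z))) V"
    using mir_conj[OF evf_aut[OF wdi] nbE[OF x]] st_Suc[OF wdw] i tk unfolding st_def al_def
    by simp
  have idz: "evf (alt s t (2 * (Suc i))) z = z" if z: "z \<in> V" for z
  proof -
    have "al s z = evf (alt t s (2 * i + 1)) z"
      using fun_cong[OF eq, of z] M z evf_conj[OF wdi x z] pal by simp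
    then have "al s (al s z) = al s (evf (alt t s (2 * i + 1)) z)" by simp
    then show ?thesis using al_inv st z by simp
  qed
  have "ev (concat (replicate (Suc i) [s, t])) = \<one>\<^bsub>AA\<^esub>"
    using idz unfolding ev_def one_AA alt_double[symmetric] by (intro restrict_ext) simp
  then have "mm s t dvd Suc i" using mm_pow st by blast
  then show False using i(2) by (simp add: nat_dvd_not_less)
qed

lemma alt_wd: "s < k \<Longrightarrow> t < k \<Longrightarrow> wd (alt s t n)"
  using alt_set[of s t n] unfolding wd_def by auto

lemma alt_red: assumes "s < k" "t < k" "s \<noteq> t" "l \<le> mm s t" shows "red (alt s t l)"
  using assms
proof (induction l arbitrary: s t rule: less_induct)
  case (less l)
  show ?case
  proof (cases l)
    case 0 then show ?thesis unfolding red_def using d_refl vV by simp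
  next
    case (Suc l')
    have IH: "red (alt t s l')" using less.IH[of l' t s] less.prems Suc mm_sym by simp
    let ?g = "evf (alt t s l') v"
    have gV: "?g \<in> V" using evf_V alt_wd less.prems vV by blast
    have dg: "d v ?g = l'" using IH unfolding red_def by simp
    show ?thesis
    proof (cases "d v (al s ?g) = Suc (d v ?g)")
      case True then show ?thesis unfolding red_def using Suc dg by simp
    next
      case False
      then have "d v (al s ?g) < d v ?g" using Bp[OF less.prems(1) gV] by simp
      then obtain j where j: "j < l'" "mirror_aut V E (st (alt t s l') j) (st (alt t s l') (Suc j)) = al s"
        using EX[OF alt_wd[OF less.prems(2,1)] less.prems(1)] by auto
      have "Suc j < mm s t" using j Suc less.prems(4) by simp
      then show ?thesis using AL[OF less.prems(1-3) j(1)] j(2) by blast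
    qed
  qed
qed

lemma BR: assumes "s < k" "t < k" "s \<noteq> t" "z \<in> V"
  shows "evf (alt s t (mm s t)) z = evf (alt t s (mm s t)) z"
proof -
  let ?m = "mm s t"
  have y: "evf (alt t s ?m) z \<in> V" using evf_V alt_wd assms by blast
  have "evf (alt s t (2 * ?m)) (evf (alt t s ?m) z) = evf (alt t s ?m) z"
    using mm_pow_id[OF assms(1,2) y] alt_double by simp
  moreover have "evf (alt s t (2 * ?m)) y = evf (alt s t ?m) (evf (rev (alt t s ?m)) y)" for y
    by (simp only: alt_braidw[symmetric] evf_app_pt)
  ultimately have "evf (alt s t ?m) (evf (rev (alt t s ?m)) (evf (alt t s ?m) z)) = evf (alt t s ?m) z"
    by simp
  then show ?thesis using evf_rev alt_wd assms by simp
qed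

end

lemma set_rel: "set (concat (replicate n [i, j])) \<subseteq> {i, j}"
  by (induction n) auto

lemma cox_words: "cox_eq m k u w \<Longrightarrow> u \<in> words k \<and> w \<in> words k"
proof (induction rule: cox_eq.induct)
  case (rel u v i j)
  have "set (concat (replicate (m i j) [i, j])) \<subseteq> {i, j}" by (rule set_rel)
  then have "set (concat (replicate (m i j) [i, j])) \<subseteq> {..<k}" using rel.hyps(3,4) by auto
  then show ?case using rel.hyps(1,2) unfolding words_def by simp
next
  case (refl w) then show ?case by simp
next
  case (sym u w) then show ?case by simp
next
  case (trans u v w) then show ?case by simp
qed

lemma CL: "cox_eq m k a b \<Longrightarrow> u \<in> words k \<Longrightarrow> cox_eq m k (u @ a) (u @ b)"
proof (induction rule: cox_eq.induct)
  case (refl w)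
  then have "u @ w \<in> words k" unfolding words_def by auto
  then show ?case by (rule cox_eq.refl)
next
  case (sym a b) then show ?case using cox_eq.sym by blast
next
  case (trans a b c) then show ?case using cox_eq.trans by blast
next
  case (rel u0 v0 i j)
  have "u @ u0 \<in> words k" using rel unfolding words_def by auto
  then have "cox_eq m k ((u @ u0) @ concat (replicate (m i j) [i, j]) @ v0) ((u @ u0) @ v0)"
    using rel by (intro cox_eq.rel) auto
  then show ?case by simp
qed

lemma CR: "cox_eq m k a b \<Longrightarrow> u \<in> words k \<Longrightarrow> cox_eq m k (a @ u) (b @ u)"
proof (induction rule: cox_eq.induct)
  case (refl w)
  then have "w @ u \<in> words k" unfolding words_def by auto
  then show ?case by (rule cox_eq.refl)
next
  case (sym a b) then show ?case using cox_eq.sym by blast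
next
  case (trans a b c) then show ?case using cox_eq.trans by blast
next
  case (rel u0 v0 i j)
  have "v0 @ u \<in> words k" using rel unfolding words_def by auto
  then have "cox_eq m k (u0 @ concat (replicate (m i j) [i, j]) @ (v0 @ u)) (u0 @ (v0 @ u))"
    using rel by (intro cox_eq.rel) auto
  then show ?case by simp
qed

context mgv begin

abbreviation ceq where "ceq \<equiv> cox_eq mm k"

lemma wd_words: "wd w \<longleftrightarrow> w \<in> words k" unfolding wd_def words_def by simp

lemma sing_words: "s < k \<Longrightarrow> [s] \<in> words k" unfolding words_def by simp

lemma ceq_refl: "wd w \<Longrightarrow> ceq w w" using cox_eq.refl wd_words by blast

lemma ceq_pair: assumes "wd u" "wd w" "i < k" shows "ceq (u @ [i, i] @ w) (u @ w)"
proof -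
  have "ceq (u @ concat (replicate (mm i i) [i, i]) @ w) (u @ w)"
    using assms wd_words by (intro cox_eq.rel) auto
  then show ?thesis unfolding mm_def by simp
qed

lemma rev_cancel: "wd w \<Longrightarrow> ceq (rev w @ w) []"
proof (induction w)
  case Nil then show ?case using ceq_refl by simp
next
  case (Cons i w)
  have iw: "i < k" "wd w" using Cons.prems by simp_all
  have "ceq (rev w @ [i, i] @ w) (rev w @ w)" using ceq_pair iw by simp
  then have "ceq (rev (i # w) @ (i # w)) (rev w @ w)" by simp
  then show ?case using Cons.IH[OF iw(2)] cox_eq.trans by blast
qed

lemma braid_cox: assumes st: "s < k" "t < k" "s \<noteq> t"
  shows "ceq (alt s t (mm s t)) (alt t s (mm s t))"
proof -
  let ?m = "mm s t"
  have w1: "wd (alt s t ?m)" "wd (alt t s ?m)" using alt_wd st by blast+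
  have "ceq ([] @ concat (replicate ?m [s, t]) @ alt t s ?m) ([] @ alt t s ?m)"
    using st w1 unfolding wd_words by (intro cox_eq.rel) (auto simp: words_def)
  moreover have eqR: "concat (replicate ?m [s, t]) = alt s t ?m @ rev (alt t s ?m)"
    using alt_braidw[of s t ?m] alt_double[of s t ?m] by simp
  ultimately have a0: "ceq ((alt s t ?m @ rev (alt t s ?m)) @ alt t s ?m) (alt t s ?m)"
    by (simp only: append_Nil)
  then have a: "ceq (alt s t ?m @ rev (alt t s ?m) @ alt t s ?m) (alt t s ?m)"
    by (simp only: append_assoc)
  have "ceq (alt s t ?m @ (rev (alt t s ?m) @ alt t s ?m)) (alt s t ?m @ [])"
    using CL[OF rev_cancel[OF w1(2)]] w1 wd_words by blast
  then have "ceq (alt s t ?m) (alt s t ?m @ rev (alt t s ?m) @ alt t s ?m)"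
    using cox_eq.sym by simp
  then show ?thesis using a cox_eq.trans by blast
qed

lemma red_len: "red w \<Longrightarrow> red w' \<Longrightarrow> evf w v = evf w' v \<Longrightarrow> length w = length w'"
  unfolding red_def by simp

lemma not_red_Suc: assumes st: "s < k" "t < k" "s \<noteq> t" shows "\<not> red (alt s t (Suc (mm s t)))"
proof
  assume r: "red (alt s t (Suc (mm s t)))"
  let ?m = "mm s t"
  have m1: "1 \<le> ?m" using mm_pos st by blast
  then obtain m' where m': "?m = Suc m'" by (cases ?m) auto
  have "evf (alt t s ?m) v = evf (alt s t ?m) v" using BR[OF st vV] by simp
  then have "evf (alt s t (Suc ?m)) v = al s (al s (evf (alt t s m') v))" using m' by simp
  also have "\<dots> = evf (alt t s m') v" using al_inv st evf_V alt_wd vV by simp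
  finally have "d v (evf (alt s t (Suc ?m)) v) \<le> m'" using G1[OF alt_wd[OF st(2,1)], of m'] by simp
  then show False using r m' unfolding red_def by simp
qed

lemma XS:
  assumes IHn: "\<And>w0 w0'. length w0 < n \<Longrightarrow> wd w0 \<Longrightarrow> wd w0' \<Longrightarrow> red w0 \<Longrightarrow> red w0' \<Longrightarrow> evf w0 v = evf w0' v \<Longrightarrow> ceq w0 w0'"
  and st: "s < k" "t < k" "s \<noteq> t" and j: "1 \<le> j" "j < mm s t"
  and xy: "wd x" "wd y" "red (alt s t j @ x)" "red (alt t s j @ y)" "length (alt s t j @ x) = n"
    "length (alt t s j @ y) = n" "evf (alt s t j @ x) v = evf (alt t s j @ y) v"
  shows "\<exists>y'. wd y' \<and> red (alt s t (Suc j) @ y') \<and> length (alt s t (Suc j) @ y') = n \<and>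
     evf (alt s t (Suc j) @ y') v = evf (alt s t j @ x) v \<and> ceq (alt s t j @ x) (alt s t (Suc j) @ y')"
proof -
  obtain j' where j': "j = Suc j'" using j(1) by (cases j) auto
  let ?X = "alt s t j @ x" and ?Y = "alt t s j @ y"
  let ?X' = "alt t s j' @ x"
  have wX: "wd ?X" "wd ?Y" "wd ?X'" using xy alt_wd st by simp_all
  have X: "?X = s # ?X'" using j' by simp
  have gV: "evf ?Y v \<in> V" "evf ?X' v \<in> V" using evf_V wX vV by blast+
  have evX: "evf ?X v = al s (evf ?X' v)" using X by simp
  have alsg: "al s (evf ?Y v) = evf ?X' v" using evX xy(7) al_inv[OF st(1) gV(2)] by simp
  have "d v (evf ?X' v) \<le> length ?X'" using G1[OF wX(3)] .
  moreover have "length ?X' = n - 1" using xy(5) j' by simp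
  moreover have "d v (evf ?Y v) = n" using xy(4,6) unfolding red_def by simp
  moreover have "n \<ge> 1" using xy(5) j' by simp
  ultimately have lt: "d v (al s (evf ?Y v)) < d v (evf ?Y v)" using alsg by simp
  obtain i where i: "i < length ?Y" "mirror_aut V E (st ?Y i) (st ?Y (Suc i)) = al s"
    using EX[OF wX(2) st(1) lt] by blast
  show ?thesis
  proof (cases "i < j")
    case True
    have t1: "take i ?Y = take i (alt t s j)" using True by simp
    have t2: "take (Suc i) ?Y = take (Suc i) (alt t s j)" using True by simp
    have "st ?Y i = st (alt t s j) i" unfolding st_def by (simp only: t1)
    moreover have "st ?Y (Suc i) = st (alt t s j) (Suc i)" unfolding st_def by (simp only: t2)
    moreover have "Suc i < mm s t" using True j by simp
    ultimately show ?thesis using AL[OF st True] i(2) by auto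
  next
    case False
    then have ij: "j \<le> i" by simp
    define y' where "y' = take (i - j) y @ drop (Suc (i - j)) y"
    have tk: "take i ?Y @ drop (Suc i) ?Y = alt t s j @ y'"
      unfolding y'_def using ij by (simp add: Suc_diff_le)
    have ilt: "i - j < length y" using i(1) ij by simp
    have wy': "wd y'" unfolding y'_def using xy(2) wd_take wd_drop by simp
    have ly': "length y' = length y - 1" unfolding y'_def using ilt by simp
    have sm: "al s (evf ?Y v) = evf (alt t s j @ y') v" using step_mirror[OF wX(2) i(1) vV] i(2) tk by simp
    let ?Z = "alt s t (Suc j) @ y'" and ?Z' = "alt t s j @ y'"
    have Z: "?Z = s # ?Z'" by simp
    have wZ: "wd ?Z" "wd ?Z'" using wy' alt_wd st by simp_all
    have evZ: "evf ?Z v = evf ?Y v" using Z sm al_inv[OF st(1) gV(1)] by simp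
    have lZ: "length ?Z = n" using ly' xy(6) ilt by simp
    have rZ: "red ?Z" unfolding red_def using evZ xy(4,6) lZ unfolding red_def by simp
    have "red ?X'" using red_app(2)[of "[s]" ?X'] xy(3) X wX st by simp
    moreover have "red ?Z'" using red_app(2)[of "[s]" ?Z'] rZ Z wZ st by simp
    moreover have "evf ?X' v = evf ?Z' v" using alsg sm by simp
    moreover have "length ?X' < n" using xy(5) j' by simp
    ultimately have "ceq ?X' ?Z'" using IHn wX(3) wZ(2) by blast
    then have "ceq ([s] @ ?X') ([s] @ ?Z')" using CL sing_words[OF st(1)] by blast
    then have "ceq ?X ?Z" using X Z by simp
    then show ?thesis using wy' rZ lZ evZ xy(7) by (intro exI[of _ y']) simp
  qed
qed

lemma CLAIM:
  assumes IHn: "\<And>w0 w0'. length w0 < n \<Longrightarrow> wd w0 \<Longrightarrow> wd w0' \<Longrightarrow> red w0 \<Longrightarrow> red w0' \<Longrightarrow> evf w0 v = evf w0' v \<Longrightarrow> ceq w0 w0'"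
  and st: "s < k" "t < k" "s \<noteq> t"
  shows "1 \<le> j \<Longrightarrow> wd x \<Longrightarrow> wd y \<Longrightarrow> red (alt s t j @ x) \<Longrightarrow> red (alt t s j @ y) \<Longrightarrow>
    length (alt s t j @ x) = n \<Longrightarrow> length (alt t s j @ y) = n \<Longrightarrow> evf (alt s t j @ x) v = evf (alt t s j @ y) v
    \<Longrightarrow> ceq (alt s t j @ x) (alt t s j @ y)"
proof (induction "n - j" arbitrary: j x y rule: less_induct)
  case less
  let ?m = "mm s t"
  have m1: "1 \<le> ?m" using mm_pos st by blast
  have wa: "wd (alt s t j)" "wd (alt t s j)" using alt_wd st by blast+
  have rj: "red (alt s t j)" using red_app(1) less.prems wa by blast
  have jm: "j \<le> ?m"
  proof (rule ccontr)
    assume "\<not> j \<le> ?m"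
    then have "alt s t j = alt s t (Suc ?m) @ drop (Suc ?m) (alt s t j)"
      using alt_take[of "Suc ?m" j s t] by (metis append_take_drop_id not_less_eq_eq)
    then have "red (alt s t (Suc ?m))" using red_app(1)[of "alt s t (Suc ?m)" "drop (Suc ?m) (alt s t j)"] rj
      alt_wd st wd_drop by metis
    then show False using not_red_Suc st by blast
  qed
  show ?case
  proof (cases "j = ?m")
    case True
    have xV: "evf x v \<in> V" "evf y v \<in> V" using evf_V less.prems vV by blast+
    have "evf (alt s t ?m) (evf x v) = evf (alt s t ?m) (evf y v)"
      using less.prems(8) True BR[OF st xV(2)] by (simp add: evf_app)
    then have exy: "evf x v = evf y v" using evf_inj[OF alt_wd[OF st(1,2)] xV] by blast
    have rx: "red x" "red y" using red_app(2) less.prems wa by blast+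
    have "length x < n" using less.prems(6) True m1 by simp
    then have cxy: "ceq x y" using IHn less.prems(2,3) rx exy by blast
    have "ceq (alt s t ?m @ x) (alt s t ?m @ y)" using CL[OF cxy] wa True wd_words by simp
    moreover have "ceq (alt s t ?m @ y) (alt t s ?m @ y)" using CR[OF braid_cox[OF st]] less.prems(3) wd_words by blast
    ultimately show ?thesis using True cox_eq.trans by blast
  next
    case False
    then have jlt: "j < ?m" using jm by simp
    obtain y1 where y1: "wd y1" "red (alt s t (Suc j) @ y1)" "length (alt s t (Suc j) @ y1) = n"
      "evf (alt s t (Suc j) @ y1) v = evf (alt s t j @ x) v" "ceq (alt s t j @ x) (alt s t (Suc j) @ y1)"
      using XS[OF IHn st less.prems(1) jlt less.prems(2-8)] by blast
    have st': "t < k" "s < k" "t \<noteq> s" using st by auto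
    have jlt': "j < mm t s" using jlt mm_sym st by simp
    obtain x1 where x1: "wd x1" "red (alt t s (Suc j) @ x1)" "length (alt t s (Suc j) @ x1) = n"
      "evf (alt t s (Suc j) @ x1) v = evf (alt t s j @ y) v" "ceq (alt t s j @ y) (alt t s (Suc j) @ x1)"
      using XS[OF IHn st' less.prems(1) jlt' less.prems(3,2,5,4,7,6) less.prems(8)[symmetric]] by blast
    have "Suc j \<le> n" using y1(3) by simp
    then have "n - Suc j < n - j" by simp
    then have "ceq (alt s t (Suc j) @ y1) (alt t s (Suc j) @ x1)"
      using less.hyps[of "Suc j" y1 x1] y1 x1 less.prems(8) by simp
    then show ?thesis using y1(5) x1(5) cox_eq.trans cox_eq.sym by meson
  qed
qed

lemma MT: "wd w \<Longrightarrow> wd w' \<Longrightarrow> red w \<Longrightarrow> red w' \<Longrightarrow> evf w v = evf w' v \<Longrightarrow> ceq w w'"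
proof (induction "length w" arbitrary: w w' rule: less_induct)
  case less
  have len: "length w' = length w" using red_len less.prems by metis
  show ?case
  proof (cases w)
    case Nil
    then have "w' = []" using len by simp
    then show ?thesis using Nil ceq_refl by simp
  next
    case (Cons s a)
    then obtain t b where w': "w' = t # b" using len by (cases w') auto
    have sa: "s < k" "wd a" "t < k" "wd b" using less.prems Cons w' by simp_all
    have IHn: "\<And>w0 w0'. length w0 < length w \<Longrightarrow> wd w0 \<Longrightarrow> wd w0' \<Longrightarrow> red w0 \<Longrightarrow> red w0' \<Longrightarrow> evf w0 v = evf w0' v \<Longrightarrow> ceq w0 w0'"
      by (rule less.hyps)
    show ?thesis
    proof (cases "s = t")
      case True
      have abV: "evf a v \<in> V" "evf b v \<in> V" using evf_V sa vV by blast+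
      have "al s (evf a v) = al s (evf b v)" using less.prems(5) Cons w' True by simp
      then have eab: "evf a v = evf b v" using al_inv[OF sa(1)] abV by metis
      have ra: "red a" "red b" using red_app(2)[of "[s]" a] red_app(2)[of "[t]" b] less.prems Cons w' sa by simp_all
      have "ceq a b" using IHn[of a b] Cons sa ra eab by simp
      then have "ceq ([s] @ a) ([s] @ b)" using CL sing_words[OF sa(1)] by blast
      then show ?thesis using Cons w' True by simp
    next
      case False
      have e1: "alt s t 1 @ a = w" "alt t s 1 @ b = w'" using Cons w' by simp_all
      have "ceq (alt s t 1 @ a) (alt t s 1 @ b)"
        apply (rule CLAIM[OF IHn sa(1,3) False])
        apply (simp_all only: e1)
        using less.prems sa len by simp_all
      then show ?thesis by (simp only: e1)
    qed
  qed
qed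

lemma RD: "wd w \<Longrightarrow> \<exists>w0. wd w0 \<and> red w0 \<and> evf w0 v = evf w v \<and> ceq w w0"
proof (induction w rule: rev_induct)
  case Nil then show ?case using ceq_refl d_refl vV unfolding red_def by (intro exI[of _ "[]"]) simp
next
  case (snoc s w1)
  have sw: "s < k" "wd w1" using snoc.prems by simp_all
  obtain w1' where w1': "wd w1'" "red w1'" "evf w1' v = evf w1 v" "ceq w1 w1'" using snoc.IH sw by blast
  have eq1: "evf w1' z = evf w1 z" if "z \<in> V" for z using R6 w1' sw that by blast
  have c1: "ceq (w1 @ [s]) (w1' @ [s])" using CR[OF w1'(4) sing_words[OF sw(1)]] .
  have ev1: "evf (w1' @ [s]) v = evf (w1 @ [s]) v" using eq1 al_V sw vV by (simp add: evf_app)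
  show ?case
  proof (cases "red (w1' @ [s])")
    case True then show ?thesis using c1 ev1 w1' sw by (intro exI[of _ "w1' @ [s]"]) simp
  next
    case False
    let ?u0 = "evf (w1' @ [s]) v"
    have u0: "?u0 = evf w1' (nb s)" using al_v sw by (simp add: evf_app)
    have e: "E (evf w1' v) ?u0" using aut_E[OF evf_aut[OF w1'(1)] nbE[OF sw(1)]] u0 by simp
    have L: "d v (evf w1' v) = length w1'" using w1'(2) unfolding red_def .
    have "d v ?u0 = Suc (d v (evf w1' v)) \<or> d v (evf w1' v) = Suc (d v ?u0)" using B[OF e vV] .
    moreover have "d v ?u0 \<noteq> Suc (length w1')" using False unfolding red_def by simp
    ultimately have Lu: "length w1' = Suc (d v ?u0)" using L by simp
    have u0V: "?u0 \<in> V" using evf_V w1'(1) sw vV by simp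
    obtain u where u: "wd u" "evf u v = ?u0" "length u = d v ?u0" using R5[OF u0V] by blast
    have eu: "evf u z = evf (w1' @ [s]) z" if z: "z \<in> V" for z
    proof (rule R6)
      show "wd u" "evf u v = evf (w1' @ [s]) v" "z \<in> V" using u z by simp_all
      show "wd (w1' @ [s])" using w1'(1) sw by simp
    qed
    have nbV: "nb s \<in> V" using EV[OF nbE[OF sw(1)]] by blast
    have "evf (u @ [s]) v = evf u (nb s)" using al_v[OF sw(1)] by (simp add: evf_app)
    also have "\<dots> = evf (w1' @ [s]) (nb s)" using eu[OF nbV] .
    also have "\<dots> = evf w1' v" using al_nb[OF sw(1)] by (simp add: evf_app)
    finally have evus: "evf (u @ [s]) v = evf w1' v" .
    have rus: "red (u @ [s])" unfolding red_def using evus L Lu u(3) by simp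
    have "ceq w1' (u @ [s])" using MT[OF w1'(1) _ w1'(2) rus evus[symmetric]] u(1) sw by simp
    then have c2: "ceq (w1' @ [s]) ((u @ [s]) @ [s])" using CR[OF _ sing_words[OF sw(1)]] by blast
    have c3: "ceq (u @ [s, s] @ []) (u @ [])" using ceq_pair[OF u(1) wd_Nil sw(1)] .
    have e: "(u @ [s]) @ [s] = u @ [s, s] @ []" "u @ [] = u" by simp_all
    have "ceq (w1' @ [s]) u" using cox_eq.trans[OF c2[unfolded e(1)] c3[unfolded e(2)]] .
    then have "ceq (w1 @ [s]) u" using cox_eq.trans[OF c1] by blast
    moreover have "red u" unfolding red_def using u by simp
    moreover have "evf u v = evf (w1 @ [s]) v" using u(2) ev1 by simp
    ultimately show ?thesis using u(1) by blast
  qed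
qed

lemma INJ: assumes "wd w" "wd w'" "evf w v = evf w' v" shows "ceq w w'"
proof -
  obtain w0 where w0: "wd w0" "red w0" "evf w0 v = evf w v" "ceq w w0" using RD assms by blast
  obtain w0' where w0': "wd w0'" "red w0'" "evf w0' v = evf w' v" "ceq w' w0'" using RD assms by blast
  have "ceq w0 w0'" using MT w0 w0' assms by simp
  then show ?thesis using w0(4) w0'(4) cox_eq.trans cox_eq.sym by meson
qed

lemma RS: "ceq a b \<Longrightarrow> z \<in> V \<Longrightarrow> evf a z = evf b z"
proof (induction arbitrary: z rule: cox_eq.induct)
  case (rel u w i j)
  have wV: "evf w z \<in> V" using evf_V rel wd_words by blast
  have "evf (concat (replicate (mm i j) [i, j])) (evf w z) = evf w z" using mm_pow_id rel wV by blast
  then show ?case by (simp add: evf_app)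
qed auto

end

context mgv begin

lemma mirror_ev: assumes e: "E x y" shows "\<exists>w. wd w \<and> mirror_aut V E x y = ev w"
proof -
  have xV: "x \<in> V" "y \<in> V" using EV e by blast+
  obtain u where u: "wd u" "evf u v = x" "length u = d v x" using R5[OF xV(1)] by blast
  have ga: "graph_aut V E (evf (rev u))" using evf_aut u(1) by simp
  have "E (evf (rev u) x) (evf (rev u) y)" using aut_E[OF ga e] .
  moreover have "evf (rev u) x = v" using evf_rev[OF u(1) vV] u(2) by simp
  ultimately have "E v (evf (rev u) y)" by simp
  then obtain i where i: "i < k" "evf (rev u) y = nb i" using nb_surj by blast
  have y: "y = evf u (nb i)" using evf_rev2[OF u(1) xV(2)] i(2) by simp
  have "mirror_aut V E x y = mirror_aut V E (evf u v) (evf u (nb i))" using u(2) y by simp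
  also have "\<dots> = restrict (\<lambda>z. evf u (mirror_aut V E v (nb i) (inv_into V (evf u) z))) V"
    using mir_conj[OF evf_aut[OF u(1)] nbE[OF i(1)]] .
  also have "\<dots> = ev (u @ [i] @ rev u)"
    unfolding ev_def al_def[symmetric] by (rule restrict_ext) (simp add: evf_conj[OF u(1) i(1)])
  finally show ?thesis using u(1) i(1) by (intro exI[of _ "u @ [i] @ rev u"]) simp
qed

lemma carrier_ev: "carrier AA = ev ` {w. wd w}"
proof
  show "ev ` {w. wd w} \<subseteq> carrier AA" using ev_carrier by blast
next
  show "carrier AA \<subseteq> ev ` {w. wd w}"
    unfolding carrier_AA
  proof
    fix h assume "h \<in> generate (BijGroup V) (Bij V \<inter> mirror_auts V E)"
    then show "h \<in> ev ` {w. wd w}"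
    proof (induction rule: generate.induct)
      case one
      have o1: "\<one>\<^bsub>BijGroup V\<^esub> = (\<lambda>x\<in>V. x)" by (simp add: BijGroup_def)
      have o2: "ev [] = (\<lambda>x\<in>V. x)" unfolding ev_def by (simp add: id_def)
      have "ev [] \<in> ev ` {w. wd w}" by (intro imageI) simp
      then show ?case by (simp only: o1 o2)
    next
      case (incl h)
      then obtain x y where "E x y" "h = mirror_aut V E x y" unfolding mirror_auts_def by blast
      then show ?case using mirror_ev by blast
    next
      case (inv h)
      then obtain x y where e: "E x y" and h: "h = mirror_aut V E x y" unfolding mirror_auts_def by blast
      have hB: "h \<in> Bij V" using inv by blast
      have hC: "h \<in> carrier (BijGroup V)" using hB by (simp add: BijGroup_def)
      have hh: "h \<otimes>\<^bsub>BijGroup V\<^esub> h = \<one>\<^bsub>BijGroup V\<^esub>"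
      proof -
        have "compose V h h = (\<lambda>x\<in>V. x)"
          unfolding compose_def using mir_invol[OF e] h by (intro restrict_ext) simp
        then show ?thesis using hB by (simp add: BijGroup_def)
      qed
      have "inv\<^bsub>BijGroup V\<^esub> h = h"
        using group.inv_equality[OF group_BijGroup hh hC hC] .
      then show ?case using mirror_ev[OF e] h by auto
    next
      case (eng h1 h2)
      then obtain a b where ab: "wd a" "wd b" "h1 = ev a" "h2 = ev b" by blast
      have "h1 \<otimes>\<^bsub>BijGroup V\<^esub> h2 = ev a \<otimes>\<^bsub>AA\<^esub> ev b"
        using ab unfolding mirror_group_def by simp
      also have "\<dots> = ev (a @ b)" using ev_mult ab by simp
      finally show ?case using ab by simp
    qed
  qed
qed

definition crel where "crel = cox_rel mm k"

lemma crel_equiv: "equiv (words k) crel"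
proof (rule equivI)
  show "crel \<subseteq> words k \<times> words k"
    unfolding crel_def cox_rel_def using cox_words by blast
  show "refl_on (words k) crel"
    unfolding refl_on_def crel_def cox_rel_def using cox_words cox_eq.refl by blast
  show "sym crel" unfolding sym_def crel_def cox_rel_def using cox_eq.sym by blast
  show "trans crel" unfolding trans_def crel_def cox_rel_def using cox_eq.trans by blast
qed

lemma crel_class: "crel `` {w} = {u. ceq w u}" unfolding crel_def cox_rel_def by simp

lemma ev_class: assumes "wd w" shows "ev ` (crel `` {w}) = {ev w}"
proof -
  have e: "ev u = ev w" if c: "ceq w u" for u unfolding ev_eq using RS[OF c] by simp
  show ?thesis unfolding crel_class
  proof
    show "ev ` {u. ceq w u} \<subseteq> {ev w}" using e by blast
    show "{ev w} \<subseteq> ev ` {u. ceq w u}" using ceq_refl[OF assms] by blast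
  qed
qed

definition phi where "phi U = the_elem (ev ` U)"

lemma phi_class: "wd w \<Longrightarrow> phi (crel `` {w}) = ev w"
  unfolding phi_def using ev_class by simp

lemma carrier_P: "carrier (presented_group mm k) = words k // crel"
  unfolding presented_group_def crel_def by simp

lemma mult_P: "U \<otimes>\<^bsub>presented_group mm k\<^esub> W = (\<Union>x\<in>U. \<Union>y\<in>W. crel `` {x @ y})"
  unfolding presented_group_def crel_def by simp

lemma phi_mult: assumes "wd a" "wd b"
  shows "phi (crel `` {a} \<otimes>\<^bsub>presented_group mm k\<^esub> crel `` {b}) = ev (a @ b)"
proof -
  let ?U = "crel `` {a}" and ?W = "crel `` {b}"
  have "ev ` (\<Union>x\<in>?U. \<Union>y\<in>?W. crel `` {x @ y}) = {ev (a @ b)}"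
  proof
    show "ev ` (\<Union>x\<in>?U. \<Union>y\<in>?W. crel `` {x @ y}) \<subseteq> {ev (a @ b)}"
    proof
      fix g assume "g \<in> ev ` (\<Union>x\<in>?U. \<Union>y\<in>?W. crel `` {x @ y})"
      then obtain x y z where xyz: "ceq a x" "ceq b y" "ceq (x @ y) z" "g = ev z"
        using crel_class by auto
      have "ev z = ev (x @ y)" using RS[OF xyz(3)] ev_eq by simp
      moreover have "ev (x @ y) = ev (a @ b)"
        unfolding ev_eq
      proof
        fix q assume q: "q \<in> V"
        have "evf y q = evf b q" using RS[OF xyz(2) q] by simp
        moreover have "evf b q \<in> V" using evf_V assms q by blast
        ultimately have "evf x (evf y q) = evf a (evf b q)" using RS[OF xyz(1)] by simp
        then show "evf (x @ y) q = evf (a @ b) q" by (simp add: evf_app)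
      qed
      ultimately show "g \<in> {ev (a @ b)}" using xyz by simp
    qed
  next
    have "a \<in> ?U" "b \<in> ?W" "a @ b \<in> crel `` {a @ b}" using crel_class ceq_refl assms by simp_all
    then show "{ev (a @ b)} \<subseteq> ev ` (\<Union>x\<in>?U. \<Union>y\<in>?W. crel `` {x @ y})" by blast
  qed
  then show ?thesis unfolding phi_def mult_P by simp
qed

lemma main_iso: "phi \<in> iso (presented_group mm k) AA \<and> (\<forall>i<k. phi (gen_class mm k i) = al i)"
proof -
  have Pc: "XX \<in> carrier (presented_group mm k) \<Longrightarrow> \<exists>w. wd w \<and> XX = crel `` {w}" for XX
    unfolding carrier_P using wd_words by (auto elim!: quotientE)
  have cP: "wd w \<Longrightarrow> crel `` {w} \<in> carrier (presented_group mm k)" for w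
    unfolding carrier_P using wd_words by (auto intro: quotientI)
  have hom: "phi \<in> hom (presented_group mm k) AA"
  proof (rule homI)
    fix XX assume "XX \<in> carrier (presented_group mm k)"
    then obtain w where "wd w" "XX = crel `` {w}" using Pc by blast
    then show "phi XX \<in> carrier AA" using phi_class ev_carrier by simp
  next
    fix XX YY assume "XX \<in> carrier (presented_group mm k)" "YY \<in> carrier (presented_group mm k)"
    then obtain a b where ab: "wd a" "XX = crel `` {a}" "wd b" "YY = crel `` {b}" using Pc by metis
    show "phi (XX \<otimes>\<^bsub>presented_group mm k\<^esub> YY) = phi XX \<otimes>\<^bsub>AA\<^esub> phi YY"
      using phi_mult ab phi_class ev_mult by simp
  qed
  have inj: "inj_on phi (carrier (presented_group mm k))"
  proof (rule inj_onI)
    fix XX YY assume XX: "XX \<in> carrier (presented_group mm k)" and YY: "YY \<in> carrier (presented_group mm k)"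
      and eq: "phi XX = phi YY"
    obtain a b where ab: "wd a" "XX = crel `` {a}" "wd b" "YY = crel `` {b}" using Pc XX YY by metis
    have "ev a = ev b" using eq ab phi_class by simp
    then have "evf a v = evf b v" using ev_eq vV by blast
    then have "ceq a b" using INJ ab by blast
    then have "(a, b) \<in> crel" unfolding crel_def cox_rel_def by simp
    then show "XX = YY" using ab eq_equiv_class_iff[OF crel_equiv] wd_words by blast
  qed
  have surj: "phi ` carrier (presented_group mm k) = carrier AA"
  proof
    show "phi ` carrier (presented_group mm k) \<subseteq> carrier AA" using hom unfolding hom_def by blast
    show "carrier AA \<subseteq> phi ` carrier (presented_group mm k)"
    proof
      fix g assume "g \<in> carrier AA"
      then obtain w where w: "wd w" "g = ev w" using carrier_ev by blast
      then have "g = phi (crel `` {w})" using phi_class by simp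
      then show "g \<in> phi ` carrier (presented_group mm k)" using cP w by blast
    qed
  qed
  have "phi \<in> iso (presented_group mm k) AA"
    unfolding iso_def bij_betw_def using hom inj surj by blast
  moreover have "phi (gen_class mm k i) = al i" if "i < k" for i
    using phi_class[of "[i]"] ev_single that unfolding gen_class_def crel_def by simp
  ultimately show ?thesis by blast
qed

lemma m_ge2: assumes "i < k" "j < k" "i \<noteq> j" shows "2 \<le> mm i j"
proof -
  have "1 \<le> mm i j" using mm_pos assms by blast
  moreover have "mm i j \<noteq> 1"
  proof
    assume "mm i j = 1"
    then have "al i \<otimes>\<^bsub>AA\<^esub> al j = \<one>\<^bsub>AA\<^esub>"
      using group.ord_eq_1[OF AA_group rr_carrier[OF assms(1,2)]] assms(3) unfolding mm_def by simp
    then have "ev [i, j] = ev []" using ev_mult[of "[i]" "[j]"] ev_single assms ev_Nil by simp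
    then have "al i (al j v) = v" using ev_eq vV by fastforce
    then have "al i (al i (al j v)) = al i v" by simp
    moreover have nbV: "nb j \<in> V" using EV[OF nbE[OF assms(2)]] by blast
    ultimately have "nb j = nb i" using al_inv[OF assms(1) nbV] al_v assms by simp
    then show False using nb_inj assms by metis
  qed
  ultimately show ?thesis by simp
qed

lemma FREE2: assumes "wd a" "wd b" "x \<in> V" "evf a x = evf b x" "y \<in> V" shows "evf a y = evf b y"
proof -
  obtain w where w: "wd w" "evf w v = x" using R5[OF assms(3)] by blast
  have "evf (a @ w) v = evf (b @ w) v" using w assms by (simp add: evf_app)
  moreover have "evf (rev w) y \<in> V" using evf_V w assms by simp
  ultimately have "evf (a @ w) (evf (rev w) y) = evf (b @ w) (evf (rev w) y)"
    using R6[of "a @ w" "b @ w" "evf (rev w) y"] w assms by simp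
  then show ?thesis using evf_rev2[OF w(1) assms(5)] by (simp add: evf_app)
qed

definition fx where "fx x = ev (rev (SOME w. wd w \<and> evf w v = x))"

lemma fx_props: assumes x: "x \<in> V" shows "fx x \<in> carrier AA" "fx x x = v"
proof -
  have "\<exists>w. wd w \<and> evf w v = x" using R5[OF x] by blast
  then have w: "wd (SOME w. wd w \<and> evf w v = x)" "evf (SOME w. wd w \<and> evf w v = x) v = x"
    using someI_ex[of "\<lambda>w. wd w \<and> evf w v = x"] by blast+
  show "fx x \<in> carrier AA" unfolding fx_def using ev_carrier w by simp
  show "fx x x = v" unfolding fx_def ev_def using evf_rev[OF w(1) vV] w(2) x by simp
qed

lemma fx_uniq: assumes x: "x \<in> V" and g: "g \<in> carrier AA" "g x = v" shows "g = fx x"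
proof -
  obtain a where a: "wd a" "g = ev a" using g carrier_ev by blast
  obtain b where b: "wd b" "fx x = ev b" using fx_props[OF x] carrier_ev by blast
  have "evf a x = evf b x" using g(2) fx_props(2)[OF x] a b x unfolding ev_def by simp
  then have "\<forall>y\<in>V. evf a y = evf b y" using FREE2 a b x by blast
  then show ?thesis using a b ev_eq by simp
qed

lemma carrier_aut: "g \<in> carrier AA \<Longrightarrow> graph_aut V E g"
  using carrier_ev evf_aut aut_cong unfolding ev_def by fastforce

lemma main_cayley: "bij_betw fx V (carrier AA) \<and>
   (\<forall>x\<in>V. \<forall>y\<in>V. E x y \<longleftrightarrow> cayley_adj AA (al ` {..<k}) (fx x) (fx y))"
proof (intro conjI)
  show "bij_betw fx V (carrier AA)"
    unfolding bij_betw_def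
  proof
    show "inj_on fx V"
    proof (rule inj_onI)
      fix x y assume xy: "x \<in> V" "y \<in> V" "fx x = fx y"
      have "fx x x = fx x y" using fx_props xy by metis
      then show "x = y" using aut_inj[OF carrier_aut[OF fx_props(1)[OF xy(1)]] xy(1,2)] by blast
    qed
    show "fx ` V = carrier AA"
    proof
      show "fx ` V \<subseteq> carrier AA" using fx_props by blast
      show "carrier AA \<subseteq> fx ` V"
      proof
        fix g assume g: "g \<in> carrier AA"
        then obtain a where a: "wd a" "g = ev a" using carrier_ev by blast
        let ?x = "evf (rev a) v"
        have xV: "?x \<in> V" using evf_V a vV by simp
        have "g ?x = v" using a evf_rev2 xV vV unfolding ev_def by simp
        then show "g \<in> fx ` V" using fx_uniq[OF xV g] xV by blast
      qed
    qed
  qed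
  show "\<forall>x\<in>V. \<forall>y\<in>V. E x y \<longleftrightarrow> cayley_adj AA (al ` {..<k}) (fx x) (fx y)"
  proof (intro ballI)
    fix x y assume x: "x \<in> V" and y: "y \<in> V"
    let ?g = "fx y"
    have gc: "?g \<in> carrier AA" and gy: "?g y = v" using fx_props y by blast+
    have ga: "graph_aut V E ?g" using carrier_aut gc by blast
    have gxV: "?g x \<in> V" using aut_V[OF ga x] .
    have mult: "al i \<otimes>\<^bsub>AA\<^esub> ?g \<in> carrier AA \<and> (al i \<otimes>\<^bsub>AA\<^esub> ?g) x = al i (?g x)" if i: "i < k" for i
    proof -
      have "al i \<in> Bij V" "?g \<in> Bij V" using al_carrier[OF i] gc AA_sub by blast+
      then have "(al i \<otimes>\<^bsub>AA\<^esub> ?g) x = al i (?g x)" using mult_AA x by (simp add: compose_def)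
      moreover have "al i \<otimes>\<^bsub>AA\<^esub> ?g \<in> carrier AA"
        using monoid.m_closed[OF group.is_monoid[OF AA_group] al_carrier[OF i] gc] .
      ultimately show ?thesis by blast
    qed
    show "E x y \<longleftrightarrow> cayley_adj AA (al ` {..<k}) (fx x) (fx y)"
    proof
      assume e: "E x y"
      have "E (?g y) (?g x)" using aut_E[OF ga Esym[OF e]] .
      then have "E v (?g x)" using gy by simp
      then obtain i where i: "i < k" "?g x = nb i" using nb_surj by blast
      have "(al i \<otimes>\<^bsub>AA\<^esub> ?g) x = v" using mult[OF i(1)] i al_nb by simp
      then have "al i \<otimes>\<^bsub>AA\<^esub> ?g = fx x" using fx_uniq[OF x] mult[OF i(1)] by blast
      then show "cayley_adj AA (al ` {..<k}) (fx x) (fx y)"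
        unfolding cayley_adj_def using fx_props x y i by force
    next
      assume "cayley_adj AA (al ` {..<k}) (fx x) (fx y)"
      then obtain i where i: "i < k" "fx x = al i \<otimes>\<^bsub>AA\<^esub> ?g" unfolding cayley_adj_def by blast
      have "al i (?g x) = v" using mult[OF i(1)] i(2) fx_props(2)[OF x] by simp
      then have "al i (al i (?g x)) = al i v" by simp
      then have "?g x = nb i" using al_inv[OF i(1) gxV] al_v[OF i(1)] by simp
      then have "E (?g y) (?g x)" using gy nbE[OF i(1)] by simp
      then have "E y x" using aut_E_iff[OF ga y x] by blast
      then show "E x y" using Esym by blast
    qed
  qed
qed

end

theorem mainTheorem12:
  fixes V :: "'a set" and E :: "'a \<Rightarrow> 'a \<Rightarrow> bool"
    and v :: 'a and k :: nat and nb :: "nat \<Rightarrow> 'a"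
  assumes "mirror_graph V E"
    and "v \<in> V"
    and "bij_betw nb {..<k} {u. E v u}"
  defines "A \<equiv> mirror_group V E"
    and "\<alpha> \<equiv> (\<lambda>i. mirror_aut V E v (nb i))"
    and "m \<equiv> (\<lambda>i j. if i = j then 1 else group.ord (mirror_group V E) (mirror_aut V E v (nb i) \<otimes>\<^bsub>mirror_group V E\<^esub> mirror_aut V E v (nb j)))"
  shows "(\<exists>\<phi>. \<phi> \<in> iso (presented_group m k) A \<and> (\<forall>i<k. \<phi> (gen_class m k i) = \<alpha> i))
       \<and> finite (carrier A)
       \<and> (\<forall>i<k. \<forall>j<k. i \<noteq> j \<longrightarrow> m i j \<ge> 2)
       \<and> (\<exists>f. bij_betw f V (carrier A) \<and>
              (\<forall>x\<in>V. \<forall>y\<in>V. E x y \<longleftrightarrow> cayley_adj A (\<alpha> ` {..<k}) (f x) (f y)))"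
proof -
  have sg: "simple_graph V E" and cn: "connected_graph V E" using assms(1) unfolding mirror_graph_def by blast+
  interpret M: mgv V E v k nb
    by (unfold_locales) (rule sg cn assms(1) assms(2) assms(3))+
  have meq: "m = M.mm" unfolding m_def M.mm_def M.al_def by (intro ext) simp
  have aeq: "\<alpha> = M.al" unfolding \<alpha>_def M.al_def by (rule ext) simp
  have Aeq: "A = mirror_group V E" unfolding A_def ..
  show ?thesis
    unfolding meq aeq Aeq
    using M.main_iso M.finite_AA M.m_ge2 M.main_cayley by blast
qed


end
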